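(* Let $\beta:\mathbf D\to\mathbf R_{>0}$ satisfy $\sum_{d\in\mathbf D}\beta(d)^p<\infty$ for some $0<p<1/2$. Then the group $\bigoplus_{\mathbf D}\mathbf Z$ is contained in the closure of $\mathbf Z_{fr}$ inside the topological group $\mathrm{Aut}(\mathbf Z^{\mathbf D},m_\beta^{\mathbf D})$ (equipped with the weak topology).
   Context: $\mathbf D=\{a/2^n:n\ge1,0\le a\le2^n-1\}\subset[0,1)$. For $b>0$, $m_b(\{n\})=e^{-n^2b/2}/Z_b$ with $Z_b=\sum_ke^{-k^2b/2}$; $m_\beta^{\mathbf D}=\bigotimes_dm_{\beta(d)}$ on $\mathbf Z^{\mathbf D}$ (product $\sigma$-algebra). $\mathbf Z_{fr}$: maps $g:\mathbf D\to\mathbf Z$ constant on each $[d_j,d_{j+1})\cap\mathbf D$ for some standard dyadic partition $0=d_1<\dots<d_{n+1}=1$ (each $(d_j,d_{j+1})$ of the form $(a/2^k,(a+1)/2^k)$); $\bigoplus_{\mathbf D}\mathbf Z$: finitely supported maps $\mathbf D\to\mathbf Z$. Both act on $\mathbf Z^{\mathbf D}$ by $(g\cdot x)(d)=g(d)+x(d)$ and are regarded (via this action) as subgroups of $\mathrm{Aut}(\mathbf Z^{\mathbf D},m_\beta^{\mathbf D})$, the group of nonsingular transformations. The weak topology: $g_n\to g$ iff $\frac{d(g_n)_*m_\beta^{\mathbf D}}{dm_\beta^{\mathbf D}}\to\frac{dg_*m_\beta^{\mathbf D}}{dm_\beta^{\mathbf D}}$ in $L^1(m_\beta^{\mathbf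 D})$ and $m_\beta^{\mathbf D}(g^{-1}A\,\Delta\,g_n^{-1}A)\to0$ for every measurable $A$. *)

theory Defs
  imports "HOL-Probability.Probability"
begin

definition dyadics :: "real set" where
  "dyadics = {real a / 2 ^ n | a n. n \<ge> 1 \<and> a \<le> 2 ^ n - 1}"

definition Zb :: "real \<Rightarrow> real" where
  "Zb b = infsum (\<lambda>k::int. exp (- (real_of_int k ^ 2) * b / 2)) UNIV"

definition mb :: "real \<Rightarrow> int measure" where
  "mb b = point_measure UNIV (\<lambda>n. ennreal (exp (- (real_of_int n ^ 2) * b / 2) / Zb b))"

definition mD :: "(real \<Rightarrow> real) \<Rightarrow> (real \<Rightarrow> int) measure" where
  "mD \<beta> = (\<Pi>\<^sub>M d\<in>dyadics. mb (\<beta> d))"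

definition shift :: "(real \<Rightarrow> int) \<Rightarrow> (real \<Rightarrow> int) \<Rightarrow> (real \<Rightarrow> int)" where
  "shift g x = (\<lambda>d\<in>dyadics. g d + x d)"

definition finsupp_D :: "(real \<Rightarrow> int) set" where
  "finsupp_D = {g. (\<forall>d. d \<notin> dyadics \<longrightarrow> g d = 0) \<and> finite {d\<in>dyadics. g d \<noteq> 0}}"

definition std_dyadic_partition :: "real list \<Rightarrow> bool" where
  "std_dyadic_partition ds \<longleftrightarrow> length ds \<ge> 2 \<and> sorted_wrt (<) ds \<and>
     ds ! 0 = 0 \<and> last ds = 1 \<and>
     (\<forall>j < length ds - 1. \<exists>(a::nat) (k::nat).
        ds ! j = real a / 2 ^ k \<and> ds ! (j + 1) = (real a + 1) / 2 ^ k)"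

definition Zfr :: "(real \<Rightarrow> int) set" where
  "Zfr = {g. (\<forall>d. d \<notin> dyadics \<longrightarrow> g d = 0) \<and>
            (\<exists>ds. std_dyadic_partition ds \<and>
               (\<forall>j < length ds - 1. \<exists>c. \<forall>d\<in>dyadics.
                   ds ! j \<le> d \<and> d < ds ! (j + 1) \<longrightarrow> g d = c))}"

definition nonsingular_aut :: "'a measure \<Rightarrow> ('a \<Rightarrow> 'a) \<Rightarrow> bool" where
  "nonsingular_aut M T \<longleftrightarrow> T \<in> M \<rightarrow>\<^sub>M M \<and>
     (\<exists>S \<in> M \<rightarrow>\<^sub>M M. \<forall>x\<in>space M. S (T x) = x \<and> T (S x) = x) \<and>
     absolutely_continuous M (distr M M T) \<and> absolutely_continuous (distr M M T) M"

definition weak_conv :: "'a measure \<Rightarrow> (nat \<Rightarrow> 'a \<Rightarrow> 'a) \<Rightarrow> ('a \<Rightarrow> 'a) \<Rightarrow> bool" where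
  "weak_conv M Ts T \<longleftrightarrow>
     (\<lambda>n. \<integral>\<^sup>+ x. ennreal \<bar>enn2real (RN_deriv M (distr M M (Ts n)) x)
                        - enn2real (RN_deriv M (distr M M T) x)\<bar> \<partial>M) \<longlonglongrightarrow> 0 \<and>
     (\<forall>A\<in>sets M. (\<lambda>n. measure M (((T -` A \<inter> space M) - (Ts n -` A \<inter> space M)) \<union>
                                    ((Ts n -` A \<inter> space M) - (T -` A \<inter> space M)))) \<longlonglongrightarrow> 0)"

end

theory Submission
  imports Defs
begin

lemma bridge:
  fixes f :: "'a \<Rightarrow> real"
  assumes "f summable_on A" "\<And>x. x \<in> A \<Longrightarrow> f x \<ge> 0"
  shows "nn_integral (count_space A) (\<lambda>x. ennreal (f x)) = ennreal (infsum f A)"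
proof -
  have "Infinite_Sum.abs_summable_on f A" using assms(1) summable_on_iff_abs_summable_on_real by blast
  then have a: "Infinite_Set_Sum.abs_summable_on f A" using abs_summable_equivalent by blast
  show ?thesis
    using nn_integral_conv_infsetsum[OF a assms(2)] infsetsum_infsum[OF a] by simp
qed

definition gw :: "real \<Rightarrow> int \<Rightarrow> real" where
  "gw b k = exp (- (real_of_int k ^ 2) * b / 2)"

definition ww :: "real \<Rightarrow> int \<Rightarrow> real" where
  "ww b k = gw b k / Zb b"

lemma gw_pos: "gw b k > 0" by (simp add: gw_def)

lemma gw_sym: "gw b (- k) = gw b k" by (simp add: gw_def)

lemma gw_mono: assumes "b > 0" "0 \<le> k" shows "gw b (k + 1) \<le> gw b k"
proof -
  have "real_of_int k ^ 2 \<le> real_of_int (k+1) ^ 2" using assms(2)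
    by (simp add: power2_eq_square algebra_simps)
  then have "real_of_int k ^ 2 * b \<le> real_of_int (k+1) ^ 2 * b" using assms(1)
    by (simp add: mult_right_mono)
  then show ?thesis unfolding gw_def by simp
qed

lemma gw_summable_nat: assumes "b > 0" shows "summable (\<lambda>n::nat. gw b (int n))"
proof (rule summable_comparison_test)
  show "summable (\<lambda>n. exp (- b / 2) ^ n)"
    using assms by (intro summable_geometric) simp
  show "\<exists>N. \<forall>n\<ge>N. norm (gw b (int n)) \<le> exp (- b / 2) ^ n"
  proof (intro exI allI impI)
    fix n :: nat
    have "real n \<le> real n ^ 2" by (cases n) (auto simp: power2_eq_square)
    then have "real n * b \<le> real n ^ 2 * b" using assms by (simp add: mult_right_mono)
    then have "gw b (int n) \<le> exp (real n * (- b / 2))"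
      unfolding gw_def by simp
    also have "\<dots> = exp (- b / 2) ^ n" by (rule exp_of_nat_mult)
    finally show "norm (gw b (int n)) \<le> exp (- b / 2) ^ n"
      using gw_pos[of b "int n"] by simp
  qed
qed

lemma gw_summable: assumes "b > 0" shows "gw b summable_on UNIV"
proof -
  have n: "(\<lambda>n::nat. gw b (int n)) summable_on UNIV"
    using gw_summable_nat[OF assms] summable_on_UNIV_nonneg_real_iff[of "\<lambda>n. gw b (int n)"]
      gw_pos[of b] by (simp add: less_imp_le)
  have 1: "gw b summable_on (int ` UNIV)"
    using n by (subst summable_on_reindex) (auto simp: o_def)
  have 2: "gw b summable_on ((\<lambda>n. - int n) ` UNIV)"
    using n by (subst summable_on_reindex) (auto simp: o_def gw_sym inj_on_def)
  have "UNIV = int ` UNIV \<union> (\<lambda>n. - int n) ` UNIV"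
  proof (rule set_eqI)
    fix x :: int
    show "x \<in> UNIV \<longleftrightarrow> x \<in> int ` UNIV \<union> (\<lambda>n. - int n) ` UNIV"
    proof (cases "x \<ge> 0")
      case True
      then have "x = int (nat x)" by simp
      then show ?thesis by blast
    next
      case False
      then have "x = - int (nat (- x))" by simp
      then show ?thesis by blast
    qed
  qed
  then show ?thesis using summable_on_union[OF 1 2] by simp
qed

lemma Zb_nn: assumes "b > 0"
  shows "(\<integral>\<^sup>+ k. ennreal (gw b k) \<partial>count_space UNIV) = ennreal (Zb b)"
proof -
  have "Zb b = infsum (gw b) UNIV" unfolding Zb_def gw_def[abs_def] by simp
  then show ?thesis using bridge[OF gw_summable[OF assms]] gw_pos[of b] by (simp add: less_imp_le)
qed

lemma Zb_ge_finite: assumes "b > 0" "finite F" shows "(\<Sum>k\<in>F. gw b k) \<le> Zb b"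
proof -
  have "ennreal (\<Sum>k\<in>F. gw b k) = (\<Sum>k\<in>F. ennreal (gw b k))"
    using gw_pos[of b] by (simp add: less_imp_le sum_ennreal)
  also have "\<dots> = (\<integral>\<^sup>+ k. ennreal (gw b k) \<partial>count_space F)"
    using assms(2) by (simp add: nn_integral_count_space_finite)
  also have "\<dots> = (\<integral>\<^sup>+ k. ennreal (gw b k) * indicator F k \<partial>count_space UNIV)"
    by (simp add: nn_integral_count_space_indicator)
  also have "\<dots> \<le> (\<integral>\<^sup>+ k. ennreal (gw b k) \<partial>count_space UNIV)"
    by (intro nn_integral_mono) (auto simp: indicator_def)
  also have "\<dots> = ennreal (Zb b)" by (rule Zb_nn[OF assms(1)])
  finally have *: "ennreal (\<Sum>k\<in>F. gw b k) \<le> ennreal (Zb b)" .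
  have "Zb b = infsum (gw b) UNIV" unfolding Zb_def gw_def[abs_def] by simp
  then have "0 \<le> Zb b" using gw_pos[of b] by (simp add: infsum_nonneg less_imp_le)
  then show ?thesis using * unfolding ennreal_le_iff2 by linarith
qed

lemma Zb_ge1: assumes "b > 0" shows "1 \<le> Zb b"
  using Zb_ge_finite[OF assms, of "{0}"] by (simp add: gw_def)

lemma Zb_pos: assumes "b > 0" shows "0 < Zb b"
  using Zb_ge1[OF assms] by simp

lemma Zb_lower: assumes "b > 0" shows "1 / Zb b \<le> 2 * sqrt b"
proof -
  define N where "N = nat \<lfloor>1 / sqrt b\<rfloor>"
  have sb: "sqrt b > 0" using assms by simp
  have f0: "0 \<le> \<lfloor>1 / sqrt b\<rfloor>" using sb by simp
  have NN: "real N = of_int \<lfloor>1 / sqrt b\<rfloor>" unfolding N_def using f0 by simp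
  have N1: "1 / sqrt b < real N + 1"
    using NN real_of_int_floor_add_one_gt[of "1 / sqrt b"] by linarith
  have Nle: "real N \<le> 1 / sqrt b"
    using NN of_int_floor_le[of "1 / sqrt b"] by linarith
  have each: "exp (- 1 / 2) \<le> gw b (int k)" if "k \<in> {0..N}" for k
  proof -
    have "real k \<le> 1 / sqrt b" using that Nle by auto
    then have "real k * sqrt b \<le> 1" using sb by (simp add: field_simps)
    then have "(real k * sqrt b) ^ 2 \<le> 1" using sb
      by (simp add: power_le_one)
    then have "real k ^ 2 * b \<le> 1" using assms by (simp add: power_mult_distrib)
    then show ?thesis unfolding gw_def by simp
  qed
  have "real (N + 1) * exp (- 1 / 2) = (\<Sum>k\<in>{0..N}. exp (- 1 / 2))" by simp
  also have "\<dots> \<le> (\<Sum>k\<in>{0..N}. gw b (int k))" by (intro sum_mono each)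
  also have "\<dots> = (\<Sum>k\<in>int ` {0..N}. gw b k)" by (simp add: sum.reindex)
  also have "\<dots> \<le> Zb b" by (rule Zb_ge_finite[OF assms]) simp
  finally have Z: "real (N + 1) * exp (- 1 / 2) \<le> Zb b" .
  have e: "exp (1/2::real) \<le> 2"
  proof -
    have "exp (1/2::real) ^ 2 = exp 1" by (simp add: exp_of_nat_mult[symmetric])
    also have "\<dots> \<le> 4" using exp_le by simp
    finally have "exp (1/2::real) ^ 2 \<le> 2 ^ 2" by simp
    then show ?thesis by (rule power2_le_imp_le) simp
  qed
  have "1 / sqrt b * exp (- 1 / 2) \<le> real (N + 1) * exp (- 1 / 2)"
    using N1 by (intro mult_right_mono) auto
  then have "1 / sqrt b * exp (- 1 / 2) \<le> Zb b"
    using Z by linarith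
  then have "1 \<le> Zb b * sqrt b * exp (1/2)" using sb
    by (simp add: field_simps exp_minus)
  also have "\<dots> \<le> Zb b * sqrt b * 2"
    using e sb Zb_pos[OF assms] by (intro mult_left_mono) auto
  finally show ?thesis using Zb_pos[OF assms] sb by (simp add: field_simps)
qed

lemma mb_eq: "mb b = point_measure UNIV (\<lambda>k. ennreal (ww b k))"
  by (simp add: mb_def ww_def gw_def)

lemma sets_mb[simp]: "sets (mb b) = UNIV"
  by (simp add: mb_eq sets_point_measure)

lemma space_mb[simp]: "space (mb b) = UNIV"
  by (simp add: mb_eq space_point_measure)

lemma measurable_mb_any[simp]: "f \<in> measurable (mb b) N \<longleftrightarrow> f \<in> UNIV \<rightarrow> space N"
  by (simp add: mb_eq)

lemma nn_integral_mb:
  "integral\<^sup>N (mb b) f = (\<integral>\<^sup>+ k. ennreal (ww b k) * f k \<partial>count_space UNIV)"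
  unfolding mb_eq point_measure_def by (subst nn_integral_density) auto

lemma ww_pos: "b > 0 \<Longrightarrow> ww b k > 0"
  using gw_pos Zb_pos by (simp add: ww_def)

lemma ww_zero: "ww b 0 = 1 / Zb b"
  by (simp add: ww_def gw_def)

lemma ww_sym: "ww b (- k) = ww b k"
  by (simp add: ww_def gw_sym)

lemma ww_mono: "b > 0 \<Longrightarrow> 0 \<le> k \<Longrightarrow> ww b (k + 1) \<le> ww b k"
  using gw_mono Zb_pos by (simp add: ww_def divide_right_mono less_imp_le)

lemma ww_total: assumes "b > 0"
  shows "(\<integral>\<^sup>+ k. ennreal (ww b k) \<partial>count_space UNIV) = 1"
proof -
  have "(\<integral>\<^sup>+ k. ennreal (ww b k) \<partial>count_space UNIV)
      = (\<integral>\<^sup>+ k. ennreal (gw b k) * ennreal (1 / Zb b) \<partial>count_space UNIV)"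
    using Zb_pos[OF assms] gw_pos[of b]
    by (intro nn_integral_cong) (simp add: ww_def ennreal_mult[symmetric] less_imp_le)
  also have "\<dots> = ennreal (Zb b) * ennreal (1 / Zb b)"
    by (simp add: nn_integral_multc Zb_nn[OF assms])
  also have "\<dots> = 1" using Zb_pos[OF assms]
    by (simp add: ennreal_mult[symmetric])
  finally show ?thesis .
qed

lemma prob_mb: assumes "b > 0" shows "prob_space (mb b)"
proof (rule prob_spaceI)
  have "emeasure (mb b) (space (mb b)) = (\<integral>\<^sup>+ k. ennreal (ww b k) \<partial>count_space UNIV)"
    unfolding mb_eq point_measure_def by (simp add: emeasure_density)
  then show "emeasure (mb b) (space (mb b)) = 1" using ww_total[OF assms] by simp
qed

lemma nn_int_shift:
  "(\<integral>\<^sup>+ k. f (k + c) \<partial>count_space (UNIV::int set)) = (\<integral>\<^sup>+ k. f k \<partial>count_space UNIV)"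
proof (rule nn_integral_bij_count_space)
  show "bij_betw (\<lambda>k. k + c) UNIV UNIV"
    by (rule bij_betwI[where g="\<lambda>k. k - c"]) auto
qed

definition D1 :: "real \<Rightarrow> int \<Rightarrow> ennreal" where
  "D1 b c = (\<integral>\<^sup>+ k. ennreal \<bar>ww b (k - c) - ww b k\<bar> \<partial>count_space UNIV)"

lemma D1_zero: "D1 b 0 = 0" by (simp add: D1_def)

lemma D1_neg: "D1 b (- c) = D1 b c"
proof -
  have "D1 b (- c) = (\<integral>\<^sup>+ k. ennreal \<bar>ww b ((k - c) + c) - ww b (k - c)\<bar> \<partial>count_space UNIV)"
    unfolding D1_def using nn_int_shift[of "\<lambda>k. ennreal \<bar>ww b (k + c) - ww b k\<bar>" "- c"] by simp
  also have "\<dots> = D1 b c" unfolding D1_def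
    by (intro nn_integral_cong) (simp add: abs_minus_commute)
  finally show ?thesis .
qed

lemma D1_triangle: "D1 b (c + d) \<le> D1 b c + D1 b d"
proof -
  have "D1 b (c + d) \<le> (\<integral>\<^sup>+ k. ennreal \<bar>ww b (k - d - c) - ww b (k - d)\<bar> + ennreal \<bar>ww b (k - d) - ww b k\<bar> \<partial>count_space UNIV)"
    unfolding D1_def
  proof (intro nn_integral_mono)
    fix k
    have "\<bar>ww b (k - (c + d)) - ww b k\<bar> \<le> \<bar>ww b (k - d - c) - ww b (k - d)\<bar> + \<bar>ww b (k - d) - ww b k\<bar>"
      by (simp add: algebra_simps)
    then show "ennreal \<bar>ww b (k - (c + d)) - ww b k\<bar> \<le> ennreal \<bar>ww b (k - d - c) - ww b (k - d)\<bar> + ennreal \<bar>ww b (k - d) - ww b k\<bar>"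
      by (simp add: ennreal_plus[symmetric] del: ennreal_plus)
  qed
  also have "\<dots> = (\<integral>\<^sup>+ k. ennreal \<bar>ww b (k - d - c) - ww b (k - d)\<bar> \<partial>count_space UNIV) + D1 b d"
    unfolding D1_def by (rule nn_integral_add) auto
  also have "(\<integral>\<^sup>+ k. ennreal \<bar>ww b (k - d - c) - ww b (k - d)\<bar> \<partial>count_space UNIV) = D1 b c"
    unfolding D1_def using nn_int_shift[of "\<lambda>k. ennreal \<bar>ww b (k - c) - ww b k\<bar>" "- d"] by simp
  finally show ?thesis .
qed

lemma D1_le2: assumes "b > 0" shows "D1 b c \<le> 2"
proof -
  have "D1 b c \<le> (\<integral>\<^sup>+ k. ennreal (ww b (k - c)) + ennreal (ww b k) \<partial>count_space UNIV)"
    unfolding D1_def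
  proof (intro nn_integral_mono)
    fix k
    have "0 < ww b (k - c)" "0 < ww b k" using ww_pos[OF assms] by auto
    then have "\<bar>ww b (k - c) - ww b k\<bar> \<le> ww b (k - c) + ww b k" by linarith
    then show "ennreal \<bar>ww b (k - c) - ww b k\<bar> \<le> ennreal (ww b (k - c)) + ennreal (ww b k)"
      using \<open>0 < ww b (k - c)\<close> \<open>0 < ww b k\<close> by (simp add: ennreal_plus[symmetric] del: ennreal_plus)
  qed
  also have "\<dots> = (\<integral>\<^sup>+ k. ennreal (ww b (k - c)) \<partial>count_space UNIV) + (\<integral>\<^sup>+ k. ennreal (ww b k) \<partial>count_space UNIV)"
    by (rule nn_integral_add) auto
  also have "(\<integral>\<^sup>+ k. ennreal (ww b (k - c)) \<partial>count_space UNIV) = 1"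
    using nn_int_shift[of "\<lambda>k. ennreal (ww b k)" "- c"] ww_total[OF assms] by simp
  finally show ?thesis using ww_total[OF assms] by (simp add: one_add_one)
qed

lemma D1_one: assumes "b > 0" shows "D1 b 1 \<le> ennreal (2 / Zb b)"
proof -
  define a where "a n = ww b (int n)" for n :: nat
  define d where "d n = a n - a (Suc n)" for n
  have d_nn: "0 \<le> d n" for n
    using ww_mono[OF assms, of "int n"] by (simp add: d_def a_def add.commute)
  have a_nn: "0 \<le> a n" for n using ww_pos[OF assms] by (simp add: a_def less_imp_le)
  have ps: "sum d {..<N} \<le> a 0" for N
    using a_nn[of N] by (simp add: d_def sum_lessThan_telescope')
  have summ: "summable d" by (rule summableI_nonneg_bounded[OF d_nn ps])
  have sd: "suminf d \<le> a 0" by (rule suminf_le_const[OF summ ps])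
  have nat_int: "(\<integral>\<^sup>+ n. ennreal (d n) \<partial>count_space UNIV) = ennreal (suminf d)"
    by (simp add: nn_integral_count_space_nat suminf_ennreal2 d_nn summ)
  define F where "F k = ennreal \<bar>ww b (k - 1) - ww b k\<bar>" for k
  have "D1 b 1 = (\<integral>\<^sup>+ k. F k * indicator {1..} k + F k * indicator {..0} k \<partial>count_space UNIV)"
    unfolding D1_def F_def by (intro nn_integral_cong) (auto simp: indicator_def)
  also have "\<dots> = (\<integral>\<^sup>+ k. F k * indicator {1..} k \<partial>count_space UNIV) + (\<integral>\<^sup>+ k. F k * indicator {..0} k \<partial>count_space UNIV)"
    by (rule nn_integral_add) auto
  also have "(\<integral>\<^sup>+ k. F k * indicator {1..} k \<partial>count_space UNIV) = (\<integral>\<^sup>+ k. F k \<partial>count_space {1..})"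
    by (simp add: nn_integral_count_space_indicator)
  also have "\<dots> = (\<integral>\<^sup>+ n. F (int n + 1) \<partial>count_space UNIV)"
  proof (rule nn_integral_bij_count_space[symmetric])
    show "bij_betw (\<lambda>n. int n + 1) UNIV {1..}"
      by (rule bij_betwI[where g="\<lambda>k. nat (k - 1)"]) auto
  qed
  also have "\<dots> = (\<integral>\<^sup>+ n. ennreal (d n) \<partial>count_space UNIV)"
    using d_nn by (intro nn_integral_cong) (simp add: F_def d_def a_def add.commute)
  also have "(\<integral>\<^sup>+ k. F k * indicator {..0} k \<partial>count_space UNIV) = (\<integral>\<^sup>+ k. F k \<partial>count_space {..0})"
    by (simp add: nn_integral_count_space_indicator)
  also have "\<dots> = (\<integral>\<^sup>+ n. F (- int n) \<partial>count_space UNIV)"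
  proof (rule nn_integral_bij_count_space[symmetric])
    show "bij_betw (\<lambda>n. - int n) UNIV {..0}"
      by (rule bij_betwI[where g="\<lambda>k. nat (- k)"]) auto
  qed
  also have "\<dots> = (\<integral>\<^sup>+ n. ennreal (d n) \<partial>count_space UNIV)"
  proof (intro nn_integral_cong)
    fix n :: nat
    have "ww b (- int n - 1) = ww b (int n + 1)"
      using ww_sym[of b "int n + 1"] by simp
    moreover have "ww b (- int n) = ww b (int n)" by (rule ww_sym)
    ultimately show "F (- int n) = ennreal (d n)"
      using d_nn[of n] by (simp add: F_def d_def a_def add.commute abs_minus_commute)
  qed
  finally have "D1 b 1 = ennreal (suminf d) + ennreal (suminf d)" using nat_int by simp
  also have "\<dots> \<le> ennreal (a 0) + ennreal (a 0)"
    using sd by (intro add_mono ennreal_leI) auto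
  also have "\<dots> = ennreal (2 / Zb b)"
    using a_nn[of 0] by (simp add: a_def ww_zero ennreal_plus[symmetric] del: ennreal_plus)
  finally show ?thesis .
qed

lemma D1_nat: "D1 b (int n) \<le> of_nat n * D1 b 1"
proof (induction n)
  case 0 then show ?case by (simp add: D1_zero)
next
  case (Suc n)
  have "D1 b (int (Suc n)) = D1 b (int n + 1)" by (simp add: add.commute)
  also have "\<dots> \<le> D1 b (int n) + D1 b 1" by (rule D1_triangle)
  also have "\<dots> \<le> of_nat n * D1 b 1 + D1 b 1" using Suc by (intro add_mono) auto
  also have "\<dots> = of_nat (Suc n) * D1 b 1" by (simp add: distrib_right)
  finally show ?case .
qed

lemma D1_lin: "D1 b c \<le> of_nat (nat \<bar>c\<bar>) * D1 b 1"
proof (cases "c \<ge> 0")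
  case True
  then show ?thesis using D1_nat[of b "nat c"] by simp
next
  case False
  then have "D1 b c = D1 b (int (nat (- c)))" using D1_neg[of b c] by simp
  also have "\<dots> \<le> of_nat (nat (- c)) * D1 b 1" by (rule D1_nat)
  finally show ?thesis using False by simp
qed

lemma D1_bound: assumes "b > 0"
  shows "D1 b c \<le> ennreal (4 * \<bar>real_of_int c\<bar> * min 1 (sqrt b))"
proof (cases "c = 0")
  case True then show ?thesis by (simp add: D1_zero)
next
  case False
  then have c1: "1 \<le> \<bar>real_of_int c\<bar>" by linarith
  have i: "D1 b c \<le> ennreal (4 * \<bar>real_of_int c\<bar> * sqrt b)"
  proof -
    have "D1 b c \<le> of_nat (nat \<bar>c\<bar>) * ennreal (2 / Zb b)"
      using D1_lin[of b c] D1_one[OF assms] by (meson mult_left_mono order_trans zero_le)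
    also have "\<dots> = ennreal (\<bar>real_of_int c\<bar> * (2 / Zb b))"
      using Zb_pos[OF assms] by (simp add: ennreal_of_nat_eq_real_of_nat ennreal_mult[symmetric])
    also have "\<dots> \<le> ennreal (\<bar>real_of_int c\<bar> * (2 * (2 * sqrt b)))"
      using Zb_lower[OF assms] by (intro ennreal_leI mult_left_mono) auto
    finally show ?thesis by (simp add: mult_ac)
  qed
  have ii: "D1 b c \<le> ennreal (4 * \<bar>real_of_int c\<bar>)"
  proof -
    have "D1 b c \<le> 2" by (rule D1_le2[OF assms])
    also have "(2::ennreal) \<le> ennreal (4 * \<bar>real_of_int c\<bar>)"
      using c1 by (simp add: ennreal_numeral[symmetric] del: ennreal_numeral)
    finally show ?thesis .
  qed
  show ?thesis
  proof (cases "sqrt b \<le> 1")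
    case True
    then have "min 1 (sqrt b) = sqrt b" by simp
    then show ?thesis using i by simp
  next
    case False
    then have "min 1 (sqrt b) = 1" by simp
    then show ?thesis using ii by simp
  qed
qed

lemma emeasure_mb: "emeasure (mb b) A = (\<integral>\<^sup>+ k. ennreal (ww b k) * indicator A k \<partial>count_space UNIV)"
  unfolding mb_eq point_measure_def by (simp add: emeasure_density)

lemma mb_shift_int: assumes "b > 0"
  shows "(\<integral>\<^sup>+ k. indicator A k * ennreal (ww b (k - c) / ww b k) \<partial>mb b) = emeasure (mb b) ((\<lambda>k. k + c) -` A)"
proof -
  have "(\<integral>\<^sup>+ k. indicator A k * ennreal (ww b (k - c) / ww b k) \<partial>mb b)
     = (\<integral>\<^sup>+ k. ennreal (ww b k) * (indicator A k * ennreal (ww b (k - c) / ww b k)) \<partial>count_space UNIV)"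
    by (rule nn_integral_mb)
  also have "\<dots> = (\<integral>\<^sup>+ k. ennreal (ww b (k - c)) * indicator A k \<partial>count_space UNIV)"
  proof (intro nn_integral_cong)
    fix k
    have p: "0 < ww b k" "0 < ww b (k - c)" using ww_pos[OF assms] by auto
    then have "ennreal (ww b k) * ennreal (ww b (k - c) / ww b k) = ennreal (ww b (k - c))"
      by (simp add: ennreal_mult[symmetric])
    then show "ennreal (ww b k) * (indicator A k * ennreal (ww b (k - c) / ww b k)) = ennreal (ww b (k - c)) * indicator A k"
      by (simp add: mult_ac)
  qed
  also have "\<dots> = (\<integral>\<^sup>+ k. ennreal (ww b k) * indicator A (k + c) \<partial>count_space UNIV)"
    using nn_int_shift[of "\<lambda>k. ennreal (ww b k) * indicator A (k + c)" "- c"] by simp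
  also have "\<dots> = emeasure (mb b) ((\<lambda>k. k + c) -` A)"
    unfolding emeasure_mb by (intro nn_integral_cong) (simp add: indicator_def)
  finally show ?thesis .
qed

locale ctx =
  fixes \<beta> :: "real \<Rightarrow> real"
  assumes pos: "\<forall>d\<in>dyadics. \<beta> d > 0"
begin

definition bb :: "real \<Rightarrow> real" where
  "bb d = (if d \<in> dyadics then \<beta> d else 1)"

lemma bb_pos: "bb d > 0" using pos by (simp add: bb_def)

abbreviation m :: "real \<Rightarrow> int measure" where "m d \<equiv> mb (bb d)"

abbreviation M where "M \<equiv> PiM dyadics m"

lemma mD_eq: "mD \<beta> = M"
  unfolding mD_def by (intro PiM_cong) (auto simp: bb_def)

sublocale P: product_prob_space m dyadics
proof -
  have "prob_space (m i)" for i using prob_mb[OF bb_pos] .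
  then show "product_prob_space m"
    unfolding product_prob_space_def product_prob_space_axioms_def product_sigma_finite_def
    by (auto simp: prob_space_imp_sigma_finite)
qed

lemma space_M: "space M = (\<Pi>\<^sub>E d\<in>dyadics. UNIV)"
  by (simp add: space_PiM)

lemma shift_space: "x \<in> space M \<Longrightarrow> shift h x \<in> space M"
  by (simp add: space_M shift_def)

lemma shift_meas[measurable]: "shift h \<in> measurable M M"
proof -
  have "(\<lambda>x. \<lambda>d\<in>dyadics. h d + x d) \<in> measurable M M"
  proof (rule measurable_restrict)
    fix d assume "d \<in> dyadics"
    have "(\<lambda>x. x d) \<in> measurable M (m d)" using \<open>d \<in> dyadics\<close> by (rule measurable_component_singleton)
    moreover have "(\<lambda>k. h d + k) \<in> measurable (m d) (m d)" by simp
    ultimately have "(\<lambda>k. h d + k) \<circ> (\<lambda>x. x d) \<in> measurable M (m d)"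
      by (rule measurable_comp)
    then show "(\<lambda>x. h d + x d) \<in> measurable M (m d)" by (simp add: o_def)
  qed
  then show ?thesis unfolding shift_def[abs_def] by simp
qed

lemma shift_comp: "x \<in> space M \<Longrightarrow> shift h (shift k x) = shift (\<lambda>d. h d + k d) x"
  by (auto simp: shift_def fun_eq_iff add.assoc)

lemma shift_cong: "(\<And>d. d \<in> dyadics \<Longrightarrow> h d = k d) \<Longrightarrow> shift h = shift k"
  by (auto simp: shift_def fun_eq_iff)

lemma shift_zero: "x \<in> space M \<Longrightarrow> shift (\<lambda>d. 0) x = x"
  by (auto simp: shift_def fun_eq_iff space_M PiE_iff extensional_def)

lemma shift_neg: "x \<in> space M \<Longrightarrow> shift (\<lambda>d. - h d) (shift h x) = x"
  by (simp add: shift_comp shift_zero)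

definition V :: "(real \<Rightarrow> int) \<Rightarrow> (real \<Rightarrow> int) set \<Rightarrow> (real \<Rightarrow> int) set" where
  "V h A = shift h -` A \<inter> space M"

lemma V_sets[measurable]: "A \<in> sets M \<Longrightarrow> V h A \<in> sets M"
  unfolding V_def by (rule measurable_sets[OF shift_meas])

lemma V_comp: "V (\<lambda>d. h d + k d) A = V k (V h A)"
  unfolding V_def using shift_comp shift_space by auto

lemma V_cong: "(\<And>d. d \<in> dyadics \<Longrightarrow> h d = k d) \<Longrightarrow> V h A = V k A"
  unfolding V_def by (simp add: shift_cong[of h k])

lemma V_distr: "A \<in> sets M \<Longrightarrow> emeasure (distr M M (shift h)) A = emeasure M (V h A)"
  unfolding V_def by (simp add: emeasure_distr)

definition TV :: "(real \<Rightarrow> int) \<Rightarrow> ennreal \<Rightarrow> bool" where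
  "TV h e \<longleftrightarrow> (\<forall>B\<in>sets M. emeasure M (V h B) \<le> emeasure M B + e \<and> emeasure M B \<le> emeasure M (V h B) + e)"

lemma TV_comp:
  assumes "TV h e1" "TV k e2" shows "TV (\<lambda>d. h d + k d) (e1 + e2)"
  unfolding TV_def
proof
  fix B assume B: "B \<in> sets M"
  then have B': "V h B \<in> sets M" by measurable
  have "emeasure M (V k (V h B)) \<le> emeasure M (V h B) + e2" using assms(2) B' by (auto simp: TV_def)
  also have "\<dots> \<le> emeasure M B + e1 + e2" using assms(1) B by (auto simp: TV_def intro: add_right_mono)
  finally have 1: "emeasure M (V k (V h B)) \<le> emeasure M B + (e1 + e2)" by (simp add: add.assoc)
  have "emeasure M B \<le> emeasure M (V h B) + e1" using assms(1) B by (auto simp: TV_def)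
  also have "\<dots> \<le> emeasure M (V k (V h B)) + e2 + e1" using assms(2) B' by (auto simp: TV_def intro: add_right_mono)
  finally have 2: "emeasure M B \<le> emeasure M (V k (V h B)) + (e1 + e2)" by (simp add: add_ac)
  show "emeasure M (V (\<lambda>d. h d + k d) B) \<le> emeasure M B + (e1 + e2) \<and>
        emeasure M B \<le> emeasure M (V (\<lambda>d. h d + k d) B) + (e1 + e2)"
    using 1 2 by (simp add: V_comp)
qed

lemma TV_mono: "TV h e \<Longrightarrow> e \<le> e' \<Longrightarrow> TV h e'"
  unfolding TV_def by (meson add_left_mono order_trans)

lemma TV_cong: "(\<And>d. d \<in> dyadics \<Longrightarrow> h d = k d) \<Longrightarrow> TV h e \<longleftrightarrow> TV k e"
  unfolding TV_def by (simp add: V_cong[of h k])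

definition NS :: "(real \<Rightarrow> int) \<Rightarrow> bool" where
  "NS h \<longleftrightarrow> (\<forall>A\<in>null_sets M. V h A \<in> null_sets M)"

lemma NS_comp: "NS h \<Longrightarrow> NS k \<Longrightarrow> NS (\<lambda>d. h d + k d)"
  unfolding NS_def by (simp add: V_comp)

lemma NS_cong: "(\<And>d. d \<in> dyadics \<Longrightarrow> h d = k d) \<Longrightarrow> NS h \<longleftrightarrow> NS k"
  unfolding NS_def by (simp add: V_cong[of h k])

definition delta :: "real \<Rightarrow> int \<Rightarrow> real \<Rightarrow> int" where
  "delta j c = (\<lambda>d. if d = j then c else 0)"

definition rho :: "real \<Rightarrow> int \<Rightarrow> (real \<Rightarrow> int) \<Rightarrow> real" where
  "rho j c x = ww (bb j) (x j - c) / ww (bb j) (x j)"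

lemma rho_pos: "rho j c x > 0"
  using ww_pos[OF bb_pos] by (simp add: rho_def)

lemma rho_meas[measurable]: "j \<in> dyadics \<Longrightarrow> (\<lambda>x. ennreal (rho j c x)) \<in> borel_measurable M"
proof -
  assume j: "j \<in> dyadics"
  have "(\<lambda>x. x j) \<in> measurable M (m j)" using j by (rule measurable_component_singleton)
  moreover have "(\<lambda>k. ennreal (ww (bb j) (k - c) / ww (bb j) k)) \<in> borel_measurable (m j)" by simp
  ultimately have "(\<lambda>k. ennreal (ww (bb j) (k - c) / ww (bb j) k)) \<circ> (\<lambda>x. x j) \<in> borel_measurable M"
    by (rule measurable_comp)
  then show ?thesis unfolding rho_def by (simp add: o_def)
qed

lemma indicator_cyl:
  assumes "finite K" "x \<in> space M"
  shows "indicator {x \<in> space M. \<forall>i\<in>K. x i \<in> B i} x = (\<Prod>i\<in>K. indicator (B i) (x i) :: ennreal)"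
  using assms
proof (induction K rule: finite_induct)
  case empty then show ?case by simp
next
  case (insert a K)
  then show ?case by (auto simp: indicator_def)
qed

lemma nn_integral_M_restrict:
  assumes "finite J" "J \<subseteq> dyadics" "G \<in> borel_measurable (PiM J m)"
  shows "(\<integral>\<^sup>+ x. G (restrict x J) \<partial>M) = (\<integral>\<^sup>+ y. G y \<partial>PiM J m)"
proof -
  have "(\<integral>\<^sup>+ y. G y \<partial>PiM J m) = (\<integral>\<^sup>+ y. G y \<partial>distr M (PiM J m) (\<lambda>x. restrict x J))"
    using P.distr_PiM_restrict_finite[OF assms(1,2)] by simp
  also have "\<dots> = (\<integral>\<^sup>+ x. G (restrict x J) \<partial>M)"
    using assms by (intro nn_integral_distr) (auto intro: measurable_restrict_subset)
  finally show ?thesis by simp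
qed

end

context ctx begin

lemma single_density:
  assumes j: "j \<in> dyadics"
  shows "distr M M (shift (delta j c)) = density M (\<lambda>x. ennreal (rho j c x))"
proof (rule measure_eqI_PiM_infinite[where I=dyadics and M=m])
  show "sets (distr M M (shift (delta j c))) = sets M" by simp
  show "sets (density M (\<lambda>x. ennreal (rho j c x))) = sets M" by simp
  show "finite_measure (distr M M (shift (delta j c)))"
    by (rule P.finite_measure_distr[OF shift_meas])
next
  fix A J assume J: "finite J" "J \<subseteq> dyadics" and A: "\<And>i. i \<in> J \<Longrightarrow> A i \<in> sets (m i)"
  define J' where "J' = insert j J"
  have J': "finite J'" "J' \<subseteq> dyadics" "j \<in> J'" using J j by (auto simp: J'_def)
  define A' where "A' i = (if i \<in> J then A i else UNIV)" for i
  define A'' where "A'' i = (if i = j then (\<lambda>k. k + c) -` A' j else A' i)" for i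
  define R where "R = prod_emb dyadics m J (Pi\<^sub>E J A)"
  have R: "R = {x \<in> space M. \<forall>i\<in>J'. x i \<in> A' i}"
    unfolding R_def prod_emb_def using J
    by (auto simp: space_M J'_def A'_def PiE_iff extensional_def)
  have Rs: "R \<in> sets M" unfolding R_def using J by (auto intro!: measurable_prod_emb sets_PiM_I_finite)
  have VR: "V (delta j c) R = {x \<in> space M. \<forall>i\<in>J'. x i \<in> A'' i}"
    unfolding R using J'(2) j by (auto simp: V_def shift_def delta_def A''_def add.commute space_M)
  have "emeasure (distr M M (shift (delta j c))) R = emeasure M (V (delta j c) R)"
    using V_distr[OF Rs] .
  also have "\<dots> = (\<Prod>i\<in>J'. emeasure (m i) (A'' i))"
    unfolding VR using J' by (intro P.emeasure_PiM_Collect) auto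
  finally have L: "emeasure (distr M M (shift (delta j c))) R = (\<Prod>i\<in>J'. emeasure (m i) (A'' i))" .
  define f where "f i k = (if i = j then indicator (A' j) k * ennreal (ww (bb j) (k - c) / ww (bb j) k) else indicator (A' i) k :: ennreal)" for i k
  define G where "G y = (\<Prod>i\<in>J'. f i (y i))" for y :: "real \<Rightarrow> int"
  have fm[measurable]: "f i \<in> borel_measurable (m i)" for i by simp
  have Gm: "G \<in> borel_measurable (PiM J' m)"
  proof -
    have "(\<lambda>y. f i (y i)) \<in> borel_measurable (PiM J' m)" if "i \<in> J'" for i
      by (rule measurable_compose[OF measurable_component_singleton[OF that] fm])
    then show ?thesis unfolding G_def by (intro borel_measurable_prod_ennreal) auto
  qed
  have "emeasure (density M (\<lambda>x. ennreal (rho j c x))) R = (\<integral>\<^sup>+ x. ennreal (rho j c x) * indicator R x \<partial>M)"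
    using Rs rho_meas[OF j] by (simp add: emeasure_density)
  also have "\<dots> = (\<integral>\<^sup>+ x. G (restrict x J') \<partial>M)"
  proof (intro nn_integral_cong)
    fix x assume x: "x \<in> space M"
    have "indicator R x = (\<Prod>i\<in>J'. indicator (A' i) (x i) :: ennreal)"
      unfolding R using indicator_cyl[OF J'(1) x] .
    also have "\<dots> = indicator (A' j) (x j) * (\<Prod>i\<in>J'-{j}. indicator (A' i) (x i))"
      using J' by (simp add: prod.remove)
    finally have I: "indicator R x = indicator (A' j) (x j) * (\<Prod>i\<in>J'-{j}. indicator (A' i) (x i) :: ennreal)" .
    have "G (restrict x J') = f j (x j) * (\<Prod>i\<in>J'-{j}. f i (x i))"
      unfolding G_def using J' by (simp add: prod.remove)
    also have "(\<Prod>i\<in>J'-{j}. f i (x i)) = (\<Prod>i\<in>J'-{j}. indicator (A' i) (x i))"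
      by (intro prod.cong) (auto simp: f_def)
    finally have Gx: "G (restrict x J') = f j (x j) * (\<Prod>i\<in>J'-{j}. indicator (A' i) (x i))" .
    show "ennreal (rho j c x) * indicator R x = G (restrict x J')"
      unfolding I Gx by (simp add: f_def rho_def mult_ac)
  qed
  also have "\<dots> = (\<integral>\<^sup>+ y. G y \<partial>PiM J' m)"
    using J' Gm by (intro nn_integral_M_restrict) auto
  also have "\<dots> = (\<Prod>i\<in>J'. integral\<^sup>N (m i) (f i))"
    unfolding G_def using J' by (intro P.product_nn_integral_prod) auto
  also have "\<dots> = (\<Prod>i\<in>J'. emeasure (m i) (A'' i))"
  proof (intro prod.cong refl)
    fix i assume "i \<in> J'"
    show "integral\<^sup>N (m i) (f i) = emeasure (m i) (A'' i)"
    proof (cases "i = j")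
      case True
      then show ?thesis unfolding f_def A''_def using mb_shift_int[OF bb_pos[of j], of "A' j" c] by simp
    next
      case False
      then show ?thesis unfolding f_def A''_def by simp
    qed
  qed
  finally show "emeasure (distr M M (shift (delta j c))) (prod_emb dyadics m J (Pi\<^sub>E J A))
      = emeasure (density M (\<lambda>x. ennreal (rho j c x))) (prod_emb dyadics m J (Pi\<^sub>E J A))"
    using L unfolding R_def by simp
qed

lemma single_emeasure:
  assumes j: "j \<in> dyadics" and B: "B \<in> sets M"
  shows "emeasure M (V (delta j c) B) = (\<integral>\<^sup>+ x. ennreal (rho j c x) * indicator B x \<partial>M)"
proof -
  have "emeasure M (V (delta j c) B) = emeasure (distr M M (shift (delta j c))) B"
    using V_distr[OF B] by simp
  also have "\<dots> = emeasure (density M (\<lambda>x. ennreal (rho j c x))) B"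
    by (simp add: single_density[OF j])
  also have "\<dots> = (\<integral>\<^sup>+ x. ennreal (rho j c x) * indicator B x \<partial>M)"
    using B rho_meas[OF j] by (simp add: emeasure_density)
  finally show ?thesis .
qed

lemma single_NS: assumes j: "j \<in> dyadics" shows "NS (delta j c)"
  unfolding NS_def
proof
  fix A assume A: "A \<in> null_sets M"
  then have "emeasure M (V (delta j c) A) = 0"
    using single_emeasure[OF j] nn_integral_null_set[OF A] by auto
  then show "V (delta j c) A \<in> null_sets M" using A by (auto intro: V_sets)
qed

lemma rho_meas_real[measurable]: "j \<in> dyadics \<Longrightarrow> (\<lambda>x. rho j c x) \<in> borel_measurable M"
proof -
  assume j: "j \<in> dyadics"
  have "(\<lambda>x. x j) \<in> measurable M (m j)" using j by (rule measurable_component_singleton)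
  moreover have "(\<lambda>k. ww (bb j) (k - c) / ww (bb j) k) \<in> borel_measurable (m j)" by simp
  ultimately have "(\<lambda>k. ww (bb j) (k - c) / ww (bb j) k) \<circ> (\<lambda>x. x j) \<in> borel_measurable M"
    by (rule measurable_comp)
  then show ?thesis unfolding rho_def by (simp add: o_def)
qed

lemma rho_int:
  assumes j: "j \<in> dyadics"
  shows "(\<integral>\<^sup>+ x. ennreal \<bar>rho j c x - 1\<bar> \<partial>M) = D1 (bb j) c"
proof -
  let ?g = "\<lambda>k. ennreal \<bar>ww (bb j) (k - c) / ww (bb j) k - 1\<bar>"
  have "(\<integral>\<^sup>+ x. ennreal \<bar>rho j c x - 1\<bar> \<partial>M) = (\<integral>\<^sup>+ x. ?g (x j) \<partial>M)"
    by (simp add: rho_def)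
  also have "\<dots> = (\<integral>\<^sup>+ k. ?g k \<partial>distr M (m j) (\<lambda>x. x j))"
    using j by (intro nn_integral_distr[symmetric]) auto
  also have "\<dots> = (\<integral>\<^sup>+ k. ?g k \<partial>m j)"
    using P.PiM_component[OF j] by simp
  also have "\<dots> = (\<integral>\<^sup>+ k. ennreal (ww (bb j) k) * ?g k \<partial>count_space UNIV)"
    by (rule nn_integral_mb)
  also have "\<dots> = D1 (bb j) c"
    unfolding D1_def
  proof (intro nn_integral_cong)
    fix k
    have p: "0 < ww (bb j) k" using ww_pos[OF bb_pos] by auto
    then have "ww (bb j) k * \<bar>ww (bb j) (k - c) / ww (bb j) k - 1\<bar> = \<bar>ww (bb j) (k - c) - ww (bb j) k\<bar>"
      by (simp add: abs_mult[symmetric] field_simps)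
    then show "ennreal (ww (bb j) k) * ?g k = ennreal \<bar>ww (bb j) (k - c) - ww (bb j) k\<bar>"
      using p by (simp add: ennreal_mult[symmetric])
  qed
  finally show ?thesis .
qed

lemma single_TV: assumes j: "j \<in> dyadics" shows "TV (delta j c) (D1 (bb j) c)"
  unfolding TV_def
proof
  fix B assume B: "B \<in> sets M"
  let ?r = "rho j c"
  have E: "emeasure M (V (delta j c) B) = (\<integral>\<^sup>+ x. ennreal (?r x) * indicator B x \<partial>M)"
    by (rule single_emeasure[OF j B])
  have MB: "emeasure M B = (\<integral>\<^sup>+ x. indicator B x \<partial>M)" using B by simp
  have "(\<integral>\<^sup>+ x. ennreal (?r x) * indicator B x \<partial>M) \<le> (\<integral>\<^sup>+ x. indicator B x + ennreal \<bar>?r x - 1\<bar> \<partial>M)"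
  proof (intro nn_integral_mono)
    fix x
    have "?r x \<le> 1 + \<bar>?r x - 1\<bar>" by linarith
    then have "ennreal (?r x) \<le> ennreal (1 + \<bar>?r x - 1\<bar>)" by (rule ennreal_leI)
    then have "ennreal (?r x) \<le> 1 + ennreal \<bar>?r x - 1\<bar>"
      by (simp add: ennreal_plus)
    then show "ennreal (?r x) * indicator B x \<le> indicator B x + ennreal \<bar>?r x - 1\<bar>"
      by (cases "x \<in> B") auto
  qed
  also have "\<dots> = emeasure M B + D1 (bb j) c"
    using B rho_int[OF j] j by (subst nn_integral_add) auto
  finally have 1: "emeasure M (V (delta j c) B) \<le> emeasure M B + D1 (bb j) c" using E by simp
  have "emeasure M B \<le> (\<integral>\<^sup>+ x. ennreal (?r x) * indicator B x + ennreal \<bar>?r x - 1\<bar> \<partial>M)"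
    unfolding MB
  proof (intro nn_integral_mono)
    fix x
    have "1 \<le> ?r x + \<bar>?r x - 1\<bar>" by linarith
    then have "1 \<le> ennreal (?r x) + ennreal \<bar>?r x - 1\<bar>"
      using rho_pos[of j c x] by (simp add: ennreal_plus[symmetric] less_imp_le del: ennreal_plus)
    then show "indicator B x \<le> ennreal (?r x) * indicator B x + ennreal \<bar>?r x - 1\<bar>"
      by (cases "x \<in> B") auto
  qed
  also have "\<dots> = emeasure M (V (delta j c) B) + D1 (bb j) c"
    using B rho_int[OF j] j E by (subst nn_integral_add) auto
  finally have 2: "emeasure M B \<le> emeasure M (V (delta j c) B) + D1 (bb j) c" .
  show "emeasure M (V (delta j c) B) \<le> emeasure M B + D1 (bb j) c \<and>
        emeasure M B \<le> emeasure M (V (delta j c) B) + D1 (bb j) c" using 1 2 by simp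
qed

lemma V_zero: "B \<in> sets M \<Longrightarrow> V (\<lambda>d. 0) B = B"
  unfolding V_def using shift_zero sets.sets_into_space by fastforce

lemma TV_zero: "TV (\<lambda>d. 0) 0"
  unfolding TV_def by (simp add: V_zero)

lemma NS_zero: "NS (\<lambda>d. 0)"
  unfolding NS_def using V_zero by (simp add: null_setsD2)

lemma fin_TV:
  assumes "finite F" "F \<subseteq> dyadics" "\<And>d. d \<notin> F \<Longrightarrow> h d = 0"
  shows "TV h (\<Sum>d\<in>F. D1 (bb d) (h d))"
  using assms
proof (induction F arbitrary: h rule: finite_induct)
  case empty
  then have "h = (\<lambda>d. 0)" by auto
  then show ?case using TV_zero by simp
next
  case (insert j F)
  define h' where "h' = h(j := 0)"
  have IH: "TV h' (\<Sum>d\<in>F. D1 (bb d) (h' d))"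
    using insert by (intro insert.IH) (auto simp: h'_def)
  have S: "(\<Sum>d\<in>F. D1 (bb d) (h' d)) = (\<Sum>d\<in>F. D1 (bb d) (h d))"
    using insert(2) by (intro sum.cong) (auto simp: h'_def)
  have "TV (\<lambda>d. delta j (h j) d + h' d) (D1 (bb j) (h j) + (\<Sum>d\<in>F. D1 (bb d) (h' d)))"
    using insert by (intro TV_comp single_TV IH) auto
  moreover have "(\<lambda>d. delta j (h j) d + h' d) = h" by (auto simp: delta_def h'_def)
  ultimately show ?case using insert(1,2) S by simp
qed

lemma fin_NS:
  assumes "finite F" "F \<subseteq> dyadics" "\<And>d. d \<notin> F \<Longrightarrow> h d = 0"
  shows "NS h"
  using assms
proof (induction F arbitrary: h rule: finite_induct)
  case empty
  then have "h = (\<lambda>d. 0)" by auto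
  then show ?case using NS_zero by simp
next
  case (insert j F)
  define h' where "h' = h(j := 0)"
  have IH: "NS h'"
    using insert by (intro insert.IH) (auto simp: h'_def)
  have "NS (\<lambda>d. delta j (h j) d + h' d)"
    using insert by (intro NS_comp single_NS IH) auto
  moreover have "(\<lambda>d. delta j (h j) d + h' d) = h" by (auto simp: delta_def h'_def)
  ultimately show ?case by simp
qed

end

lemma approx_sigma:
  assumes alg: "algebra \<Omega> G"
    and fP: "finite_measure P" and fQ: "finite_measure Q"
    and sP: "sets P = sigma_sets \<Omega> G" and sQ: "sets Q = sigma_sets \<Omega> G"
    and B: "B \<in> sigma_sets \<Omega> G"
  shows "\<forall>e>0. \<exists>C\<in>G. measure P ((B - C) \<union> (C - B)) < e \<and> measure Q ((B - C) \<union> (C - B)) < e"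
proof -
  interpret A: algebra \<Omega> G by fact
  have sub: "G \<subseteq> Pow \<Omega>" using A.space_closed .
  have Gs: "G \<subseteq> sigma_sets \<Omega> G" by (auto intro: sigma_sets.Basic)
  show ?thesis using B
  proof (induction B rule: sigma_sets.induct)
    case (Basic a)
    then show ?case by (intro allI impI bexI[of _ a]) auto
  next
    case Empty
    then show ?case by (intro allI impI bexI[of _ "{}"]) auto
  next
    case (Compl a)
    show ?case
    proof (intro allI impI)
      fix e :: real assume e: "0 < e"
      obtain C where C: "C \<in> G" "measure P ((a - C) \<union> (C - a)) < e" "measure Q ((a - C) \<union> (C - a)) < e"
        using Compl.IH e by blast
      have aO: "a \<subseteq> \<Omega>" using sigma_sets_into_sp[OF sub Compl.hyps] .
      have CO: "C \<subseteq> \<Omega>" using C(1) sub by auto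
      have eq: "((\<Omega> - a) - (\<Omega> - C)) \<union> ((\<Omega> - C) - (\<Omega> - a)) = (a - C) \<union> (C - a)"
        using aO CO by auto
      show "\<exists>C\<in>G. measure P ((\<Omega> - a - C) \<union> (C - (\<Omega> - a))) < e \<and> measure Q ((\<Omega> - a - C) \<union> (C - (\<Omega> - a))) < e"
        using C eq by (intro bexI[of _ "\<Omega> - C"]) (auto intro: A.compl_sets)
    qed
  next
    case (Union A)
    show ?case
    proof (intro allI impI)
      fix e :: real assume e: "0 < e"
      define U where "U = \<Union> (range A)"
      define Bn where "Bn n = (\<Union>i<n. A i)" for n
      have inc: "incseq Bn" unfolding Bn_def incseq_def by (auto intro: less_le_trans)
      have UB: "\<Union> (range Bn) = U" unfolding Bn_def U_def by auto
      have As: "A i \<in> sigma_sets \<Omega> G" for i using Union.hyps by auto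
      have Bns: "Bn n \<in> sigma_sets \<Omega> G" for n
        unfolding Bn_def by (intro sigma_sets_UNION) (auto intro: As)
      have Us: "U \<in> sigma_sets \<Omega> G" unfolding U_def by (intro sigma_sets.Union As)
      have lim: "\<forall>\<^sub>F n in sequentially. measure R (U - Bn n) < e / 2"
        if fR: "finite_measure R" and sR: "sets R = sigma_sets \<Omega> G" for R
      proof -
        interpret R: finite_measure R by fact
        have "(\<lambda>n. measure R (Bn n)) \<longlonglongrightarrow> measure R U"
          using R.finite_Lim_measure_incseq[of Bn] inc Bns sR UB by auto
        then have "\<forall>\<^sub>F n in sequentially. measure R U - e / 2 < measure R (Bn n)"
          using e by (intro order_tendstoD(1)) auto
        then show ?thesis
        proof (rule eventually_mono)
          fix n assume "measure R U - e / 2 < measure R (Bn n)"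
          moreover have "measure R (U - Bn n) = measure R U - measure R (Bn n)"
            using Bns Us sR UB by (intro R.finite_measure_Diff) auto
          ultimately show "measure R (U - Bn n) < e / 2" by simp
        qed
      qed
      obtain n where n: "measure P (U - Bn n) < e / 2" "measure Q (U - Bn n) < e / 2"
        using eventually_conj[OF lim[OF fP sP] lim[OF fQ sQ]] eventually_sequentially by auto
      define e' where "e' = e / (2 * (real n + 1))"
      have e': "0 < e'" using e by (simp add: e'_def)
      have "\<forall>i. \<exists>C. C \<in> G \<and> measure P ((A i - C) \<union> (C - A i)) < e' \<and> measure Q ((A i - C) \<union> (C - A i)) < e'"
        using Union.IH e' by blast
      then obtain C where C: "\<And>i. C i \<in> G" "\<And>i. measure P ((A i - C i) \<union> (C i - A i)) < e'"
          "\<And>i. measure Q ((A i - C i) \<union> (C i - A i)) < e'"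
        by metis
      define Cn where "Cn = (\<Union>i<n. C i)"
      have Cn: "Cn \<in> G" unfolding Cn_def using C(1) by (intro A.finite_UN) auto
      have incl: "(U - Cn) \<union> (Cn - U) \<subseteq> (U - Bn n) \<union> (\<Union>i<n. (A i - C i) \<union> (C i - A i))"
        unfolding U_def Cn_def Bn_def by blast
      have key: "measure R ((U - Cn) \<union> (Cn - U)) < e"
        if fR: "finite_measure R" and sR: "sets R = sigma_sets \<Omega> G"
          and r1: "measure R (U - Bn n) < e / 2" and r2: "\<And>i. measure R ((A i - C i) \<union> (C i - A i)) < e'" for R
      proof -
        interpret R: finite_measure R by fact
        have Cs: "C i \<in> sets R" for i using C(1) Gs sR by auto
        have Ss: "(A i - C i) \<union> (C i - A i) \<in> sets R" for i
        proof -
          have "A i \<in> sets R" "C i \<in> sets R" using As Cs sR by auto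
          then show ?thesis by (intro sets.Un sets.Diff)
        qed
        have Us': "U \<in> sets R" using Us sR by simp
        have Bs': "Bn n \<in> sets R" using Bns sR by simp
        have UNs: "(\<Union>i<n. (A i - C i) \<union> (C i - A i)) \<in> sets R"
          using Ss by (intro sets.finite_UN) auto
        have Big: "(U - Bn n) \<union> (\<Union>i<n. (A i - C i) \<union> (C i - A i)) \<in> sets R"
          using Us' Bs' UNs by (intro sets.Un sets.Diff)
        have "measure R ((U - Cn) \<union> (Cn - U)) \<le> measure R ((U - Bn n) \<union> (\<Union>i<n. (A i - C i) \<union> (C i - A i)))"
          using incl Big by (intro R.finite_measure_mono)
        also have "\<dots> \<le> measure R (U - Bn n) + measure R (\<Union>i<n. (A i - C i) \<union> (C i - A i))"
          using Us' Bs' UNs by (intro measure_Un_le sets.Diff) (auto simp: R.emeasure_eq_measure)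
        also have "measure R (\<Union>i<n. (A i - C i) \<union> (C i - A i)) \<le> (\<Sum>i<n. measure R ((A i - C i) \<union> (C i - A i)))"
          using Ss by (intro R.finite_measure_subadditive_finite) auto
        also have "\<dots> \<le> (\<Sum>i<n. e')" using r2 by (intro sum_mono less_imp_le) auto
        also have "\<dots> = real n * e'" by simp
        also have "real n * e' \<le> e / 2"
          using e by (simp add: e'_def field_simps)
        finally show ?thesis using r1 by simp
      qed
      show "\<exists>C\<in>G. measure P ((\<Union> (range A) - C) \<union> (C - \<Union> (range A))) < e \<and>
                  measure Q ((\<Union> (range A) - C) \<union> (C - \<Union> (range A))) < e"
        using key[OF fP sP n(1) C(2)] key[OF fQ sQ n(2) C(3)] Cn unfolding U_def by blast
    qed
  qed
qed

lemma vimage_sub_un: "A \<subseteq> B \<union> C \<Longrightarrow> f -` A \<inter> X \<subseteq> (f -` B \<inter> X) \<union> (f -` C \<inter> X)"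
  by auto

context ctx begin

lemma restrict_shift_local:
  assumes "J \<subseteq> dyadics" "\<And>d. d \<in> J \<Longrightarrow> h d = h' d"
  shows "restrict (shift h x) J = restrict (shift h' x) J"
  using assms by (auto simp: shift_def restrict_def fun_eq_iff)

lemma V_emb_local:
  assumes "J \<subseteq> dyadics" "\<And>d. d \<in> J \<Longrightarrow> h d = h' d"
  shows "V h (prod_emb dyadics m J X) = V h' (prod_emb dyadics m J X)"
  using restrict_shift_local[OF assms] shift_space
  unfolding V_def prod_emb_def by (auto simp: space_M)

lemma inf_TV:
  assumes bound: "\<And>F. finite F \<Longrightarrow> F \<subseteq> dyadics \<Longrightarrow> (\<Sum>d\<in>F. D1 (bb d) (h d)) \<le> e"
  shows "TV h e"
  unfolding TV_def
proof
  fix B assume B: "B \<in> sets M"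
  define Q where "Q = distr M M (shift h)"
  have fQ: "finite_measure Q" unfolding Q_def by (rule P.finite_measure_distr[OF shift_meas])
  have fM: "finite_measure M" by (rule P.finite_measure_axioms)
  have sQ: "sets Q = sigma_sets (space M) P.generator" unfolding Q_def using P.sets_PiM_generator by simp
  have QV: "emeasure Q A = emeasure M (V h A)" if "A \<in> sets M" for A
    unfolding Q_def using V_distr[OF that] .
  have main: "emeasure M (V h B) \<le> emeasure M B + e + ennreal \<epsilon> \<and> emeasure M B \<le> emeasure M (V h B) + e + ennreal \<epsilon>"
    if eps: "0 < \<epsilon>" for \<epsilon>
  proof -
    have "B \<in> sigma_sets (space M) P.generator" using B P.sets_PiM_generator by simp
    from approx_sigma[OF P.algebra_generator fM fQ P.sets_PiM_generator sQ this, rule_format, of "\<epsilon> / 2"] eps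
    obtain C where C: "C \<in> P.generator" "measure M ((B - C) \<union> (C - B)) < \<epsilon> / 2"
      "measure Q ((B - C) \<union> (C - B)) < \<epsilon> / 2" by auto
    from C(1) obtain J X where JX: "C = prod_emb dyadics m J X" "finite J" "J \<subseteq> dyadics" "X \<in> sets (PiM J m)"
      by (auto simp: P.generator.simps)
    have Cs: "C \<in> sets M" using JX by (auto intro: measurable_prod_emb)
    define S where "S = (B - C) \<union> (C - B)"
    have Ss: "S \<in> sets M" unfolding S_def using B Cs by auto
    have MS: "emeasure M S \<le> ennreal (\<epsilon> / 2)"
    proof -
      have "emeasure M S = ennreal (measure M S)" by (simp add: P.emeasure_eq_measure)
      also have "\<dots> \<le> ennreal (\<epsilon> / 2)" using C(2) unfolding S_def by (intro ennreal_leI) linarith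
      finally show ?thesis .
    qed
    have QS: "emeasure M (V h S) \<le> ennreal (\<epsilon> / 2)"
    proof -
      have "emeasure M (V h S) = emeasure Q S" using QV[OF Ss] by simp
      also have "\<dots> = ennreal (measure Q S)" using fQ by (simp add: finite_measure.emeasure_eq_measure)
      also have "\<dots> \<le> ennreal (\<epsilon> / 2)" using C(3) unfolding S_def by (intro ennreal_leI) linarith
      finally show ?thesis .
    qed
    define hJ where "hJ d = (if d \<in> J then h d else 0)" for d
    have TJ: "TV hJ e"
    proof (rule TV_mono)
      show "TV hJ (\<Sum>d\<in>J. D1 (bb d) (hJ d))"
        using JX by (intro fin_TV) (auto simp: hJ_def)
      have "(\<Sum>d\<in>J. D1 (bb d) (hJ d)) = (\<Sum>d\<in>J. D1 (bb d) (h d))"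
        by (intro sum.cong) (auto simp: hJ_def)
      also have "\<dots> \<le> e" using bound JX by auto
      finally show "(\<Sum>d\<in>J. D1 (bb d) (hJ d)) \<le> e" .
    qed
    have VC: "V h C = V hJ C" unfolding JX(1) using JX by (intro V_emb_local) (auto simp: hJ_def)
    have VhC: "emeasure M (V h C) \<le> emeasure M C + e" "emeasure M C \<le> emeasure M (V h C) + e"
      using TJ Cs unfolding TV_def VC by auto
    have half: "ennreal (\<epsilon> / 2) + ennreal (\<epsilon> / 2) = ennreal \<epsilon>"
      using eps by (simp add: ennreal_plus[symmetric] del: ennreal_plus)
    have sub1: "B \<subseteq> C \<union> S" "C \<subseteq> B \<union> S" unfolding S_def by blast+
    have sub2a: "V h B \<subseteq> V h C \<union> V h S" unfolding V_def by (rule vimage_sub_un[OF sub1(1)])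
    have sub2b: "V h C \<subseteq> V h B \<union> V h S" unfolding V_def by (rule vimage_sub_un[OF sub1(2)])
    have U1: "V h C \<union> V h S \<in> sets M" "V h B \<union> V h S \<in> sets M" "B \<union> S \<in> sets M" "C \<union> S \<in> sets M"
      by (rule sets.Un[OF V_sets[OF Cs] V_sets[OF Ss]], rule sets.Un[OF V_sets[OF B] V_sets[OF Ss]],
          rule sets.Un[OF B Ss], rule sets.Un[OF Cs Ss])
    have "emeasure M (V h B) \<le> emeasure M (V h C \<union> V h S)"
      using U1(1) sub2a by (rule emeasure_mono[rotated])
    also have "\<dots> \<le> emeasure M (V h C) + emeasure M (V h S)"
      using V_sets[OF Cs] V_sets[OF Ss] by (rule emeasure_subadditive)
    also have "\<dots> \<le> (emeasure M C + e) + ennreal (\<epsilon> / 2)"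
      using VhC QS by (intro add_mono) auto
    also have "emeasure M C \<le> emeasure M (B \<union> S)"
      using U1(3) sub1(2) by (rule emeasure_mono[rotated])
    also have "\<dots> \<le> emeasure M B + emeasure M S"
      using B Ss by (rule emeasure_subadditive)
    also have "emeasure M B + emeasure M S + e + ennreal (\<epsilon> / 2) \<le> emeasure M B + ennreal (\<epsilon> / 2) + e + ennreal (\<epsilon> / 2)"
      using MS by (intro add_mono) auto
    also have "\<dots> = emeasure M B + e + ennreal \<epsilon>"
      using half by (simp add: add_ac)
    finally have 1: "emeasure M (V h B) \<le> emeasure M B + e + ennreal \<epsilon>"
      by (simp add: add_ac)
    have "emeasure M B \<le> emeasure M (C \<union> S)"
      using U1(4) sub1(1) by (rule emeasure_mono[rotated])
    also have "\<dots> \<le> emeasure M C + emeasure M S"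
      using Cs Ss by (rule emeasure_subadditive)
    also have "\<dots> \<le> (emeasure M (V h C) + e) + ennreal (\<epsilon> / 2)"
      using VhC MS by (intro add_mono) auto
    also have "emeasure M (V h C) \<le> emeasure M (V h B \<union> V h S)"
      using U1(2) sub2b by (rule emeasure_mono[rotated])
    also have "\<dots> \<le> emeasure M (V h B) + emeasure M (V h S)"
      using V_sets[OF B] V_sets[OF Ss] by (rule emeasure_subadditive)
    also have "emeasure M (V h B) + emeasure M (V h S) + e + ennreal (\<epsilon> / 2) \<le> emeasure M (V h B) + ennreal (\<epsilon> / 2) + e + ennreal (\<epsilon> / 2)"
      using QS by (intro add_mono) auto
    also have "\<dots> = emeasure M (V h B) + e + ennreal \<epsilon>"
      using half by (simp add: add_ac)
    finally have 2: "emeasure M B \<le> emeasure M (V h B) + e + ennreal \<epsilon>"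
      by (simp add: add_ac)
    show ?thesis using 1 2 by simp
  qed
  show "emeasure M (V h B) \<le> emeasure M B + e \<and> emeasure M B \<le> emeasure M (V h B) + e"
  proof
    show "emeasure M (V h B) \<le> emeasure M B + e"
      by (rule ennreal_le_epsilon) (use main in auto)
    show "emeasure M B \<le> emeasure M (V h B) + e"
      by (rule ennreal_le_epsilon) (use main in auto)
  qed
qed

lemma inf_NS:
  assumes "\<And>\<epsilon>. 0 < \<epsilon> \<Longrightarrow> \<exists>F. finite F \<and> F \<subseteq> dyadics \<and> TV (\<lambda>d. if d \<in> F then 0 else h d) (ennreal \<epsilon>)"
  shows "NS h"
  unfolding NS_def
proof
  fix A assume A: "A \<in> null_sets M"
  have *: "emeasure M (V h A) \<le> 0 + ennreal \<epsilon>" if eps: "0 < \<epsilon>" for \<epsilon>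
  proof -
    obtain F where F: "finite F" "F \<subseteq> dyadics" "TV (\<lambda>d. if d \<in> F then 0 else h d) (ennreal \<epsilon>)"
      using assms eps by blast
    define hF where "hF d = (if d \<in> F then h d else 0)" for d
    define hR where "hR d = (if d \<in> F then 0 else h d)" for d
    have "NS hF" using F by (intro fin_NS[of F]) (auto simp: hF_def)
    then have N: "V hF A \<in> null_sets M" using A unfolding NS_def by auto
    have "h = (\<lambda>d. hF d + hR d)" by (auto simp: hF_def hR_def fun_eq_iff)
    then have "V h A = V hR (V hF A)" using V_comp[of hF hR A] by simp
    also have "emeasure M (V hR (V hF A)) \<le> emeasure M (V hF A) + ennreal \<epsilon>"
      using F(3) N unfolding TV_def hR_def by auto
    finally show ?thesis using N by (simp add: null_setsD1)
  qed
  have le: "emeasure M (V h A) \<le> 0" by (rule ennreal_le_epsilon, rule *, assumption)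
  have "V h A \<in> sets M" by (rule V_sets[OF null_setsD2[OF A]])
  then show "V h A \<in> null_sets M" using le by (simp add: null_sets_def)
qed

definition phi :: "real \<Rightarrow> real" where "phi d = min 1 (sqrt (bb d))"

lemma phi_nn: "0 \<le> phi d" using bb_pos[of d] by (simp add: phi_def less_imp_le)

lemma D1_phi:
  assumes "\<bar>real_of_int c\<bar> \<le> G"
  shows "D1 (bb d) c \<le> ennreal (4 * G * phi d)"
proof -
  have "D1 (bb d) c \<le> ennreal (4 * \<bar>real_of_int c\<bar> * phi d)"
    using D1_bound[OF bb_pos] by (simp add: phi_def)
  also have "\<dots> \<le> ennreal (4 * G * phi d)"
    using assms phi_nn by (intro ennreal_leI mult_right_mono) auto
  finally show ?thesis .
qed

lemma sum_D1_phi: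
  assumes "\<And>d. \<bar>real_of_int (h d)\<bar> \<le> G" "0 \<le> G"
  shows "(\<Sum>d\<in>F. D1 (bb d) (h d)) \<le> ennreal (4 * G * (\<Sum>d\<in>F. phi d))"
proof -
  have "(\<Sum>d\<in>F. D1 (bb d) (h d)) \<le> (\<Sum>d\<in>F. ennreal (4 * G * phi d))"
    by (rule sum_mono, rule D1_phi, rule assms(1))
  also have "\<dots> = ennreal (\<Sum>d\<in>F. 4 * G * phi d)"
    using assms(2) phi_nn by (intro sum_ennreal mult_nonneg_nonneg) auto
  also have "\<dots> = ennreal (4 * G * (\<Sum>d\<in>F. phi d))"
    by (simp add: sum_distrib_left)
  finally show ?thesis .
qed

end

locale ctx2 = ctx +
  assumes summ0: "(\<lambda>d. min 1 (sqrt (\<beta> d))) summable_on dyadics"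
begin

lemma summ: "phi summable_on dyadics"
  using summ0 by (rule summable_on_cong[THEN iffD1, rotated]) (auto simp: phi_def bb_def)

lemma tail:
  assumes "0 < \<epsilon>"
  shows "\<exists>F. finite F \<and> F \<subseteq> dyadics \<and> (\<forall>F'. finite F' \<longrightarrow> F' \<subseteq> dyadics - F \<longrightarrow> (\<Sum>d\<in>F'. phi d) \<le> \<epsilon>)"
proof -
  obtain F where F: "finite F" "F \<subseteq> dyadics" "dist (sum phi F) (infsum phi dyadics) \<le> \<epsilon>"
    using infsum_finite_approximation[OF summ assms] by blast
  have "(\<Sum>d\<in>F'. phi d) \<le> \<epsilon>" if F': "finite F'" "F' \<subseteq> dyadics - F" for F'
  proof -
    have "infsum phi (F \<union> F') \<le> infsum phi dyadics"
      using F F' phi_nn by (intro infsum_mono_neutral summ summable_on_finite) auto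
    moreover have "infsum phi (F \<union> F') = sum phi F + sum phi F'"
    proof -
      have "F \<inter> F' = {}" using F' by auto
      then have "sum phi (F \<union> F') = sum phi F + sum phi F'"
        using F(1) F'(1) by (rule sum.union_disjoint[rotated 2])
      then show ?thesis using F(1) F'(1) by (simp add: infsum_finite)
    qed
    ultimately show ?thesis using F(3) by (simp add: dist_real_def)
  qed
  then show ?thesis using F by blast
qed

lemma tail_TV:
  assumes "0 < \<epsilon>" "0 \<le> G"
  shows "\<exists>F. finite F \<and> F \<subseteq> dyadics \<and>
           (\<forall>h. (\<forall>d. \<bar>real_of_int (h d)\<bar> \<le> G) \<longrightarrow> (\<forall>d\<in>F. h d = 0) \<longrightarrow> TV h (ennreal \<epsilon>))"
proof -
  define \<epsilon>' where "\<epsilon>' = \<epsilon> / (4 * G + 1)"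
  have e': "0 < \<epsilon>'" using assms by (simp add: \<epsilon>'_def)
  obtain F where F: "finite F" "F \<subseteq> dyadics"
    "\<And>F'. finite F' \<Longrightarrow> F' \<subseteq> dyadics - F \<Longrightarrow> (\<Sum>d\<in>F'. phi d) \<le> \<epsilon>'"
    using tail[OF e'] by blast
  have "TV h (ennreal \<epsilon>)" if h: "\<forall>d. \<bar>real_of_int (h d)\<bar> \<le> G" "\<forall>d\<in>F. h d = 0" for h
  proof (rule inf_TV)
    fix F' assume F': "finite F'" "F' \<subseteq> dyadics"
    have "(\<Sum>d\<in>F'. D1 (bb d) (h d)) = (\<Sum>d\<in>F' \<inter> F. D1 (bb d) (h d)) + (\<Sum>d\<in>F' - F. D1 (bb d) (h d))"
      using F' by (simp add: sum.Int_Diff)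
    also have "(\<Sum>d\<in>F' \<inter> F. D1 (bb d) (h d)) = 0"
      using h by (simp add: D1_zero)
    also have "(\<Sum>d\<in>F' - F. D1 (bb d) (h d)) \<le> ennreal (4 * G * (\<Sum>d\<in>F' - F. phi d))"
      using h assms by (intro sum_D1_phi) auto
    also have "\<dots> \<le> ennreal (4 * G * \<epsilon>')"
      using F(3)[of "F' - F"] F' assms by (intro ennreal_leI mult_left_mono) auto
    also have "\<dots> \<le> ennreal \<epsilon>"
    proof (rule ennreal_leI)
      have "4 * G * \<epsilon>' \<le> (4 * G + 1) * \<epsilon>'" using e' by (simp add: algebra_simps)
      also have "\<dots> = \<epsilon>" using assms by (simp add: \<epsilon>'_def)
      finally show "4 * G * \<epsilon>' \<le> \<epsilon>" .
    qed
    finally show "(\<Sum>d\<in>F'. D1 (bb d) (h d)) \<le> ennreal \<epsilon>" by simp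
  qed
  then show ?thesis using F by blast
qed

lemma bounded_NS:
  assumes "\<And>d. \<bar>real_of_int (h d)\<bar> \<le> G"
  shows "NS h"
proof (rule inf_NS)
  fix \<epsilon> :: real assume e: "0 < \<epsilon>"
  have G: "0 \<le> G" using assms[of 0] by linarith
  obtain F where F: "finite F" "F \<subseteq> dyadics"
    "\<And>h. (\<forall>d. \<bar>real_of_int (h d)\<bar> \<le> G) \<Longrightarrow> (\<forall>d\<in>F. h d = 0) \<Longrightarrow> TV h (ennreal \<epsilon>)"
    using tail_TV[OF e G] by blast
  have "TV (\<lambda>d. if d \<in> F then 0 else h d) (ennreal \<epsilon>)"
    using assms G by (intro F(3)) auto
  then show "\<exists>F. finite F \<and> F \<subseteq> dyadics \<and> TV (\<lambda>d. if d \<in> F then 0 else h d) (ennreal \<epsilon>)"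
    using F by blast
qed

end

lemma tendsto_ennreal_0I:
  fixes X :: "nat \<Rightarrow> ennreal"
  assumes "\<And>\<epsilon>::real. 0 < \<epsilon> \<Longrightarrow> eventually (\<lambda>n. X n \<le> ennreal \<epsilon>) sequentially"
  shows "X \<longlonglongrightarrow> 0"
proof (rule order_tendstoI)
  fix a :: ennreal assume "a < 0" then show "eventually (\<lambda>n. a < X n) sequentially" by simp
next
  fix a :: ennreal assume a: "0 < a"
  show "eventually (\<lambda>n. X n < a) sequentially"
  proof (cases "a = \<top>")
    case True
    have t: "ennreal 1 < \<top>" by simp
    have "eventually (\<lambda>n. X n \<le> ennreal 1) sequentially" using assms[of 1] by simp
    then show ?thesis
    proof (rule eventually_mono)
      fix n assume "X n \<le> ennreal 1"
      then have "X n < \<top>" using t by (rule le_less_trans)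
      then show "X n < a" using True by simp
    qed
  next
    case False
    define \<epsilon> where "\<epsilon> = enn2real a / 2"
    have ar: "a = ennreal (enn2real a)" using False by (simp add: ennreal_enn2real_if)
    have pos: "0 < enn2real a" using a False by (simp add: enn2real_positive_iff less_top)
    have e: "0 < \<epsilon>" using pos by (simp add: \<epsilon>_def)
    have lt: "ennreal \<epsilon> < a"
      using pos by (subst ar) (simp add: \<epsilon>_def ennreal_less_iff)
    show ?thesis using assms[OF e] by (rule eventually_mono) (use lt in auto)
  qed
qed

lemma L1_TV:
  fixes M :: "'a measure"
  assumes sf: "sigma_finite_measure M"
    and Q1: "finite_measure Q1" "sets Q1 = sets M" "absolutely_continuous M Q1"
    and Q2: "finite_measure Q2" "sets Q2 = sets M" "absolutely_continuous M Q2"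
    and tv1: "\<And>B. B \<in> sets M \<Longrightarrow> emeasure Q1 B \<le> emeasure Q2 B + e"
    and tv2: "\<And>B. B \<in> sets M \<Longrightarrow> emeasure Q2 B \<le> emeasure Q1 B + e"
  shows "(\<integral>\<^sup>+ x. ennreal \<bar>enn2real (RN_deriv M Q1 x) - enn2real (RN_deriv M Q2 x)\<bar> \<partial>M) \<le> 2 * e"
proof -
  interpret sigma_finite_measure M by fact
  define u1 where "u1 x = enn2real (RN_deriv M Q1 x)" for x
  define u2 where "u2 x = enn2real (RN_deriv M Q2 x)" for x
  have u1m[measurable]: "u1 \<in> borel_measurable M" unfolding u1_def by measurable
  have u2m[measurable]: "u2 \<in> borel_measurable M" unfolding u2_def by measurable
  have u1n: "0 \<le> u1 x" for x by (simp add: u1_def)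
  have u2n: "0 \<le> u2 x" for x by (simp add: u2_def)
  have rep: "emeasure Q B = (\<integral>\<^sup>+ x. ennreal (enn2real (RN_deriv M Q x)) * indicator B x \<partial>M)"
    if fQ: "finite_measure Q" and sQ: "sets Q = sets M" and acQ: "absolutely_continuous M Q"
      and B: "B \<in> sets M" for Q B
  proof -
    have sfQ: "sigma_finite_measure Q"
      using fQ by (simp add: finite_measure_def)
    have "emeasure Q B = emeasure (density M (RN_deriv M Q)) B"
      using density_RN_deriv[OF acQ sQ] by simp
    also have "\<dots> = (\<integral>\<^sup>+ x. RN_deriv M Q x * indicator B x \<partial>M)"
      using B by (simp add: emeasure_density)
    also have "\<dots> = (\<integral>\<^sup>+ x. ennreal (enn2real (RN_deriv M Q x)) * indicator B x \<partial>M)"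
    proof (rule nn_integral_cong_AE)
      show "AE x in M. RN_deriv M Q x * indicator B x = ennreal (enn2real (RN_deriv M Q x)) * indicator B x"
        using RN_deriv_finite[OF sfQ acQ sQ] by eventually_elim (simp add: ennreal_enn2real_if)
    qed
    finally show ?thesis .
  qed
  have r1: "emeasure Q1 B = (\<integral>\<^sup>+ x. ennreal (u1 x) * indicator B x \<partial>M)" if "B \<in> sets M" for B
    unfolding u1_def using rep[OF Q1 that] .
  have r2: "emeasure Q2 B = (\<integral>\<^sup>+ x. ennreal (u2 x) * indicator B x \<partial>M)" if "B \<in> sets M" for B
    unfolding u2_def using rep[OF Q2 that] .
  have fin2: "emeasure Q2 B \<noteq> \<infinity>" for B using Q2(1) by (simp add: finite_measure.emeasure_finite)
  have fin1: "emeasure Q1 B \<noteq> \<infinity>" for B using Q1(1) by (simp add: finite_measure.emeasure_finite)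
  define E where "E = {x \<in> space M. u2 x \<le> u1 x}"
  have E[measurable]: "E \<in> sets M" unfolding E_def by measurable
  have E'[measurable]: "space M - E \<in> sets M" using E by auto
  define X1 where "X1 = (\<integral>\<^sup>+ x. ennreal (u1 x - u2 x) * indicator E x \<partial>M)"
  define X2 where "X2 = (\<integral>\<^sup>+ x. ennreal (u2 x - u1 x) * indicator (space M - E) x \<partial>M)"
  have "emeasure Q1 E = (\<integral>\<^sup>+ x. ennreal (u2 x) * indicator E x + ennreal (u1 x - u2 x) * indicator E x \<partial>M)"
    unfolding r1[OF E]
  proof (intro nn_integral_cong)
    fix x assume "x \<in> space M"
    show "ennreal (u1 x) * indicator E x = ennreal (u2 x) * indicator E x + ennreal (u1 x - u2 x) * indicator E x"
      using u2n[of x] by (cases "x \<in> E") (auto simp: E_def ennreal_plus[symmetric] simp del: ennreal_plus)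
  qed
  also have "\<dots> = emeasure Q2 E + X1"
    unfolding X1_def r2[OF E] by (rule nn_integral_add) auto
  finally have "emeasure Q2 E + X1 \<le> emeasure Q2 E + e" using tv1[OF E] by simp
  then have X1: "X1 \<le> e" using fin2[of E] by (simp add: ennreal_add_left_cancel_le)
  have "emeasure Q2 (space M - E) = (\<integral>\<^sup>+ x. ennreal (u1 x) * indicator (space M - E) x + ennreal (u2 x - u1 x) * indicator (space M - E) x \<partial>M)"
    unfolding r2[OF E']
  proof (intro nn_integral_cong)
    fix x assume "x \<in> space M"
    show "ennreal (u2 x) * indicator (space M - E) x = ennreal (u1 x) * indicator (space M - E) x + ennreal (u2 x - u1 x) * indicator (space M - E) x"
      using u1n[of x] \<open>x \<in> space M\<close> by (cases "x \<in> E") (auto simp: E_def ennreal_plus[symmetric] simp del: ennreal_plus)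
  qed
  also have "\<dots> = emeasure Q1 (space M - E) + X2"
    unfolding X2_def r1[OF E'] by (rule nn_integral_add) auto
  finally have "emeasure Q1 (space M - E) + X2 \<le> emeasure Q1 (space M - E) + e" using tv2[OF E'] by simp
  then have X2: "X2 \<le> e" using fin1[of "space M - E"] by (simp add: ennreal_add_left_cancel_le)
  have "(\<integral>\<^sup>+ x. ennreal \<bar>u1 x - u2 x\<bar> \<partial>M) = (\<integral>\<^sup>+ x. ennreal (u1 x - u2 x) * indicator E x + ennreal (u2 x - u1 x) * indicator (space M - E) x \<partial>M)"
  proof (intro nn_integral_cong)
    fix x assume x: "x \<in> space M"
    show "ennreal \<bar>u1 x - u2 x\<bar> = ennreal (u1 x - u2 x) * indicator E x + ennreal (u2 x - u1 x) * indicator (space M - E) x"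
    proof (cases "x \<in> E")
      case True
      then have "u2 x \<le> u1 x" by (simp add: E_def)
      then show ?thesis using True by (simp add: abs_if ennreal_neg)
    next
      case False
      then have "u1 x < u2 x" using x by (simp add: E_def)
      then show ?thesis using False x by (simp add: abs_if ennreal_neg)
    qed
  qed
  also have "\<dots> = X1 + X2" unfolding X1_def X2_def by (rule nn_integral_add) auto
  also have "\<dots> \<le> e + e" using X1 X2 by (rule add_mono)
  also have "\<dots> = 2 * e" by (simp add: mult_2)
  finally show ?thesis by (simp add: u1_def u2_def)
qed

lemma dyadic_common:
  assumes "finite S" "S \<subseteq> dyadics"
  shows "\<exists>N. \<forall>s\<in>S. \<exists>a::nat. s = real a / 2 ^ N"
  using assms
proof (induction S rule: finite_induct)
  case empty then show ?case by simp
next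
  case (insert s S)
  then obtain N where N: "\<forall>s\<in>S. \<exists>a::nat. s = real a / 2 ^ N" by auto
  from insert.prems obtain a n where s: "s = real a / 2 ^ n" unfolding dyadics_def by auto
  have "\<forall>t\<in>insert s S. \<exists>b::nat. t = real b / 2 ^ (N + n)"
  proof
    fix t assume "t \<in> insert s S"
    then show "\<exists>b::nat. t = real b / 2 ^ (N + n)"
    proof
      assume "t = s"
      then have "t = real (a * 2 ^ N) / 2 ^ (N + n)" using s by (simp add: power_add)
      then show ?thesis by blast
    next
      assume "t \<in> S"
      then obtain b :: nat where "t = real b / 2 ^ N" using N by auto
      then have "t = real (b * 2 ^ n) / 2 ^ (N + n)" by (simp add: power_add)
      then show ?thesis by blast
    qed
  qed
  then show ?case by blast
qed

lemma dyadic_refine: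
  assumes "s = real a / 2 ^ N" "N \<le> m"
  shows "s = real (a * 2 ^ (m - N)) / 2 ^ m"
proof -
  obtain k where k: "m = N + k" using assms(2) le_Suc_ex by blast
  then show ?thesis using assms(1) by (simp add: power_add)
qed

lemma floor_unique_nat:
  fixes a j :: nat and x :: real
  assumes "real a \<le> x" "x < real a + 1" "real j \<le> x" "x < real j + 1"
  shows "a = j"
proof -
  have "real a < real j + 1" "real j < real a + 1" using assms by linarith+
  then have "real a < real (Suc j)" "real j < real (Suc a)" by simp_all
  then have "a < Suc j" "j < Suc a" by (simp_all only: of_nat_less_iff)
  then show ?thesis by simp
qed

lemma key_floor:
  fixes a j :: nat and d :: real
  assumes d: "real j / 2 ^ m \<le> d" "d < (real j + 1) / 2 ^ m"
  shows "(real a / 2 ^ m \<le> d \<and> d < real a / 2 ^ m + 1 / 2 ^ m) \<longleftrightarrow> a = j"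
proof -
  define x where "x = d * 2 ^ m"
  have p: "(0::real) < 2 ^ m" by simp
  have "real j \<le> x" "x < real j + 1" using d p by (simp_all add: x_def field_simps)
  moreover have "(real a / 2 ^ m \<le> d \<and> d < real a / 2 ^ m + 1 / 2 ^ m) \<longleftrightarrow> (real a \<le> x \<and> x < real a + 1)"
    using p by (simp add: x_def field_simps)
  ultimately show ?thesis using floor_unique_nat[of a x j] by auto
qed

definition approx :: "(real \<Rightarrow> int) \<Rightarrow> real set \<Rightarrow> nat \<Rightarrow> real \<Rightarrow> int" where
  "approx g S m d = (if d \<in> dyadics then (\<Sum>s\<in>S. if s \<le> d \<and> d < s + 1 / 2 ^ m then g s else 0) else 0)"

lemma approx_bound: "\<bar>real_of_int (approx g S m d)\<bar> \<le> (\<Sum>s\<in>S. \<bar>real_of_int (g s)\<bar>)"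
proof (cases "d \<in> dyadics")
  case False
  then show ?thesis by (simp add: approx_def sum_nonneg)
next
  case True
  have e: "real_of_int (approx g S m d) = (\<Sum>s\<in>S. if s \<le> d \<and> d < s + 1 / 2 ^ m then real_of_int (g s) else 0)"
  proof -
    have "real_of_int (approx g S m d) = (\<Sum>s\<in>S. real_of_int (if s \<le> d \<and> d < s + 1 / 2 ^ m then g s else 0))"
      unfolding approx_def by (simp only: if_P[OF True] of_int_sum)
    also have "\<dots> = (\<Sum>s\<in>S. if s \<le> d \<and> d < s + 1 / 2 ^ m then real_of_int (g s) else 0)"
      by (intro sum.cong refl) simp
    finally show ?thesis .
  qed
  have "\<bar>(\<Sum>s\<in>S. if s \<le> d \<and> d < s + 1 / 2 ^ m then real_of_int (g s) else 0)\<bar>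
        \<le> (\<Sum>s\<in>S. \<bar>if s \<le> d \<and> d < s + 1 / 2 ^ m then real_of_int (g s) else 0\<bar>)"
    by (rule sum_abs)
  also have "\<dots> \<le> (\<Sum>s\<in>S. \<bar>real_of_int (g s)\<bar>)" by (intro sum_mono) auto
  finally show ?thesis unfolding e .
qed

lemma dyadic_mem: "1 \<le> m \<Longrightarrow> j < 2 ^ m \<Longrightarrow> real j / 2 ^ m \<in> dyadics"
  unfolding dyadics_def by (rule CollectI, rule exI[of _ j], rule exI[of _ m]) auto

context
  fixes g :: "real \<Rightarrow> int" and S :: "real set" and N :: nat
  assumes S: "finite S" "S \<subseteq> dyadics" and N: "\<forall>s\<in>S. \<exists>a::nat. s = real a / 2 ^ N"
begin

lemma S_refine: "s \<in> S \<Longrightarrow> N \<le> m \<Longrightarrow> \<exists>a::nat. s = real a / 2 ^ m"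
  using N dyadic_refine by blast

lemma approx_const:
  assumes m: "N \<le> m" and d: "real j / 2 ^ m \<le> d" "d < (real j + 1) / 2 ^ m" "d \<in> dyadics"
  shows "approx g S m d = (\<Sum>s\<in>S. if s = real j / 2 ^ m then g s else 0)"
  unfolding approx_def using d(3)
proof (simp, intro sum.cong refl)
  fix s assume s: "s \<in> S"
  obtain a :: nat where a: "s = real a / 2 ^ m" using S_refine[OF s m] by blast
  have "(s \<le> d \<and> d < s + 1 / 2 ^ m) \<longleftrightarrow> a = j" unfolding a by (rule key_floor[OF d(1,2)])
  also have "\<dots> \<longleftrightarrow> s = real j / 2 ^ m" unfolding a by (simp add: divide_right_mono)
  finally show "(if s \<le> d \<and> d < s + 1 / 2 ^ m then g s else 0) = (if s = real j / 2 ^ m then g s else 0)"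
    by simp
qed

lemma approx_Zfr:
  assumes m: "N \<le> m" "1 \<le> m"
  shows "approx g S m \<in> Zfr"
proof -
  define ds where "ds = map (\<lambda>j. real j / 2 ^ m) [0..<2 ^ m + 1]"
  have len: "length ds = 2 ^ m + 1" by (simp add: ds_def)
  have nth: "ds ! j = real j / 2 ^ m" if "j < 2 ^ m + 1" for j
    using that unfolding ds_def by (simp del: upt_Suc add: nth_map)
  have part: "std_dyadic_partition ds"
    unfolding std_dyadic_partition_def
  proof (intro conjI)
    show "2 \<le> length ds" using len by simp
    show "sorted_wrt (<) ds"
      unfolding ds_def sorted_wrt_map
      by (rule sorted_wrt_mono_rel[OF _ sorted_wrt_upt]) (simp add: divide_strict_right_mono)
    show "ds ! 0 = 0" using nth[of 0] by simp
    show "last ds = 1" unfolding ds_def by (simp add: last_map)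
    show "\<forall>j<length ds - 1. \<exists>a k. ds ! j = real a / 2 ^ k \<and> ds ! (j + 1) = (real a + 1) / 2 ^ k"
    proof (intro allI impI)
      fix j assume "j < length ds - 1"
      then have "j < 2 ^ m" using len by simp
      then show "\<exists>a k. ds ! j = real a / 2 ^ k \<and> ds ! (j + 1) = (real a + 1) / 2 ^ k"
        using nth[of j] nth[of "j + 1"] by (intro exI[of _ j] exI[of _ m]) simp
    qed
  qed
  have const: "\<forall>j < length ds - 1. \<exists>c. \<forall>d\<in>dyadics. ds ! j \<le> d \<and> d < ds ! (j + 1) \<longrightarrow> approx g S m d = c"
  proof (intro allI impI)
    fix j assume "j < length ds - 1"
    then have j: "j < 2 ^ m" using len by simp
    show "\<exists>c. \<forall>d\<in>dyadics. ds ! j \<le> d \<and> d < ds ! (j + 1) \<longrightarrow> approx g S m d = c"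
    proof (intro exI ballI impI)
      fix d assume "d \<in> dyadics" "ds ! j \<le> d \<and> d < ds ! (j + 1)"
      then show "approx g S m d = (\<Sum>s\<in>S. if s = real j / 2 ^ m then g s else 0)"
        using j nth[of j] nth[of "j+1"] by (intro approx_const[OF m(1)]) (auto simp: add.commute)
    qed
  qed
  have "\<forall>d. d \<notin> dyadics \<longrightarrow> approx g S m d = 0" by (simp add: approx_def)
  then show ?thesis unfolding Zfr_def using part const by blast
qed

lemma approx_on_S:
  assumes m: "N \<le> m" and d: "d \<in> S"
  shows "approx g S m d = g d"
proof -
  obtain j :: nat where dj: "d = real j / 2 ^ m" using S_refine[OF d m] by blast
  have "approx g S m d = (\<Sum>s\<in>S. if s = real j / 2 ^ m then g s else 0)"
  proof (rule approx_const[OF m])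
    show "d \<in> dyadics" using d S(2) by auto
    show "real j / 2 ^ m \<le> d" using dj by simp
    show "d < (real j + 1) / 2 ^ m" using dj by (simp add: divide_strict_right_mono)
  qed
  also have "\<dots> = (\<Sum>s\<in>S. if s = d then g s else 0)" using dj by simp
  also have "\<dots> = g d" using S(1) d by (simp add: sum.delta')
  finally show ?thesis .
qed

lemma approx_vanish:
  assumes d: "d \<notin> S" and far: "\<And>s. s \<in> S \<Longrightarrow> s < d \<Longrightarrow> 1 / 2 ^ m \<le> d - s"
  shows "approx g S m d = 0"
  unfolding approx_def
proof (cases "d \<in> dyadics")
  case True
  have "(\<Sum>s\<in>S. if s \<le> d \<and> d < s + 1 / 2 ^ m then g s else 0) = (\<Sum>s\<in>S. 0)"
  proof (intro sum.cong refl)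
    fix s assume s: "s \<in> S"
    have "\<not> (s \<le> d \<and> d < s + 1 / 2 ^ m)"
    proof
      assume h: "s \<le> d \<and> d < s + 1 / 2 ^ m"
      then have "s < d" using d s by (cases "s = d") auto
      then show False using far[OF s] h by simp
    qed
    then show "(if s \<le> d \<and> d < s + 1 / 2 ^ m then g s else 0) = 0" by (simp only: if_False)
  qed
  then show "(if d \<in> dyadics then \<Sum>s\<in>S. if s \<le> d \<and> d < s + 1 / 2 ^ m then g s else 0 else 0) = 0"
    using True by simp
qed simp

end

lemma eventually_small_pow:
  assumes "0 < (\<delta>::real)"
  shows "eventually (\<lambda>n. 1 / 2 ^ (n + c) \<le> \<delta>) sequentially"
proof -
  obtain n0 where n0: "(1/2::real) ^ n0 < \<delta>" using real_arch_pow_inv[OF assms, of "1/2"] by auto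
  show ?thesis unfolding eventually_sequentially
  proof (intro exI allI impI)
    fix n assume "n0 \<le> n"
    then have "(1/2::real) ^ (n + c) \<le> (1/2) ^ n0" by (intro power_decreasing) auto
    then show "1 / 2 ^ (n + c) \<le> \<delta>" using n0 by (simp add: power_one_over)
  qed
qed

lemma symdiff_incl:
  assumes "f -` C \<inter> X = C" "B \<subseteq> X"
  shows "(B - (f -` B \<inter> X)) \<union> ((f -` B \<inter> X) - B) \<subseteq> ((B - C) \<union> (C - B)) \<union> (f -` ((B - C) \<union> (C - B)) \<inter> X)"
  using assms by blast

context ctx2 begin

lemma nonsing:
  assumes b: "\<And>d. \<bar>real_of_int (h d)\<bar> \<le> G"
  shows "nonsingular_aut M (shift h)"
  unfolding nonsingular_aut_def
proof (intro conjI)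
  show "shift h \<in> M \<rightarrow>\<^sub>M M" by (rule shift_meas)
  show "\<exists>S\<in>M \<rightarrow>\<^sub>M M. \<forall>x\<in>space M. S (shift h x) = x \<and> shift h (S x) = x"
  proof (intro bexI ballI conjI)
    fix x assume x: "x \<in> space M"
    show "shift (\<lambda>d. - h d) (shift h x) = x" by (rule shift_neg[OF x])
    have "shift h (shift (\<lambda>d. - h d) x) = shift (\<lambda>d. h d + - h d) x" by (rule shift_comp[OF x])
    also have "\<dots> = shift (\<lambda>d. 0) x" by simp
    also have "\<dots> = x" by (rule shift_zero[OF x])
    finally show "shift h (shift (\<lambda>d. - h d) x) = x" .
  qed (rule shift_meas)
  have NSh: "NS h" using b by (rule bounded_NS)
  have NSm: "NS (\<lambda>d. - h d)" using b by (intro bounded_NS[of _ G]) simp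
  show "absolutely_continuous M (distr M M (shift h))"
    unfolding absolutely_continuous_def
  proof
    fix A assume A: "A \<in> null_sets M"
    then have As: "A \<in> sets M" by (rule null_setsD2)
    have "V h A \<in> null_sets M" using NSh A unfolding NS_def by auto
    then have "emeasure (distr M M (shift h)) A = 0" using V_distr[OF As] by (simp add: null_setsD1)
    then show "A \<in> null_sets (distr M M (shift h))" using As by (simp add: null_sets_def)
  qed
  show "absolutely_continuous (distr M M (shift h)) M"
    unfolding absolutely_continuous_def
  proof
    fix A assume A: "A \<in> null_sets (distr M M (shift h))"
    then have As: "A \<in> sets M" by (simp add: null_sets_def)
    have "emeasure M (V h A) = 0" using A V_distr[OF As] by (simp add: null_sets_def)
    then have "V h A \<in> null_sets M" using V_sets[OF As] by (simp add: null_sets_def)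
    then have "V (\<lambda>d. - h d) (V h A) \<in> null_sets M" using NSm unfolding NS_def by auto
    also have "V (\<lambda>d. - h d) (V h A) = V (\<lambda>d. h d + - h d) A" by (rule V_comp[symmetric])
    also have "\<dots> = V (\<lambda>d. 0) A" by simp
    also have "\<dots> = A" by (rule V_zero[OF As])
    finally show "A \<in> null_sets M" .
  qed
qed

lemma main:
  fixes g :: "real \<Rightarrow> int" and gs hn :: "nat \<Rightarrow> real \<Rightarrow> int" and G :: real
  assumes bg: "\<And>d. \<bar>real_of_int (g d)\<bar> \<le> G"
    and bgs: "\<And>n d. \<bar>real_of_int (gs n d)\<bar> \<le> G"
    and rel: "\<And>n d. d \<in> dyadics \<Longrightarrow> gs n d = g d + hn n d"
    and bh: "\<And>n d. \<bar>real_of_int (hn n d)\<bar> \<le> G"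
    and ev: "\<And>F. finite F \<Longrightarrow> eventually (\<lambda>n. \<forall>d\<in>F. hn n d = 0) sequentially"
  shows "weak_conv M (\<lambda>n. shift (gs n)) (shift g)"
proof -
  have G: "0 \<le> G" using bg[of 0] by linarith
  have Vrel: "V (gs n) B = V (hn n) (V g B)" for n B
  proof -
    have "V (gs n) B = V (\<lambda>d. g d + hn n d) B" using rel by (intro V_cong) auto
    also have "\<dots> = V (hn n) (V g B)" by (rule V_comp)
    finally show ?thesis .
  qed
  have sfM: "sigma_finite_measure M" by (rule prob_space_imp_sigma_finite[OF P.prob_space_axioms])
  have ac: "absolutely_continuous M (distr M M (shift h))" if "\<And>d. \<bar>real_of_int (h d)\<bar> \<le> G" for h
    using nonsing[OF that] unfolding nonsingular_aut_def by auto
  have part1: "(\<lambda>n. \<integral>\<^sup>+ x. ennreal \<bar>enn2real (RN_deriv M (distr M M (shift (gs n))) x)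
                        - enn2real (RN_deriv M (distr M M (shift g)) x)\<bar> \<partial>M) \<longlonglongrightarrow> 0"
  proof (rule tendsto_ennreal_0I)
    fix \<epsilon> :: real assume e: "0 < \<epsilon>"
    obtain F where F: "finite F" "F \<subseteq> dyadics"
      "\<And>h. (\<forall>d. \<bar>real_of_int (h d)\<bar> \<le> G) \<Longrightarrow> (\<forall>d\<in>F. h d = 0) \<Longrightarrow> TV h (ennreal (\<epsilon> / 2))"
      using tail_TV[of "\<epsilon> / 2" G] e G by auto
    show "eventually (\<lambda>n. (\<integral>\<^sup>+ x. ennreal \<bar>enn2real (RN_deriv M (distr M M (shift (gs n))) x)
                        - enn2real (RN_deriv M (distr M M (shift g)) x)\<bar> \<partial>M) \<le> ennreal \<epsilon>) sequentially"
      using ev[OF F(1)]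
    proof (rule eventually_mono)
      fix n assume van: "\<forall>d\<in>F. hn n d = 0"
      have TVn: "TV (hn n) (ennreal (\<epsilon> / 2))" using bh van by (intro F(3)) auto
      have "(\<integral>\<^sup>+ x. ennreal \<bar>enn2real (RN_deriv M (distr M M (shift (gs n))) x)
                        - enn2real (RN_deriv M (distr M M (shift g)) x)\<bar> \<partial>M) \<le> 2 * ennreal (\<epsilon> / 2)"
      proof (rule L1_TV[OF sfM])
        show "finite_measure (distr M M (shift (gs n)))" by (rule P.finite_measure_distr[OF shift_meas])
        show "finite_measure (distr M M (shift g))" by (rule P.finite_measure_distr[OF shift_meas])
        show "sets (distr M M (shift (gs n))) = sets M" by simp
        show "sets (distr M M (shift g)) = sets M" by simp
        show "absolutely_continuous M (distr M M (shift (gs n)))" using bgs by (intro ac) auto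
        show "absolutely_continuous M (distr M M (shift g))" using bg by (intro ac) auto
      next
        fix B assume B: "B \<in> sets M"
        have B': "V g B \<in> sets M" using B by (rule V_sets)
        have eq1: "emeasure (distr M M (shift (gs n))) B = emeasure M (V (hn n) (V g B))"
          using V_distr[OF B] Vrel by simp
        have eq2: "emeasure (distr M M (shift g)) B = emeasure M (V g B)"
          using V_distr[OF B] by simp
        show "emeasure (distr M M (shift (gs n))) B \<le> emeasure (distr M M (shift g)) B + ennreal (\<epsilon> / 2)"
          using TVn B' unfolding eq1 eq2 TV_def by auto
        show "emeasure (distr M M (shift g)) B \<le> emeasure (distr M M (shift (gs n))) B + ennreal (\<epsilon> / 2)"
          using TVn B' unfolding eq1 eq2 TV_def by auto
      qed
      also have "2 * ennreal (\<epsilon> / 2) = ennreal \<epsilon>"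
        using e by (simp add: mult_2 ennreal_plus[symmetric] del: ennreal_plus)
      finally show "(\<integral>\<^sup>+ x. ennreal \<bar>enn2real (RN_deriv M (distr M M (shift (gs n))) x)
                        - enn2real (RN_deriv M (distr M M (shift g)) x)\<bar> \<partial>M) \<le> ennreal \<epsilon>" .
    qed
  qed
  have part2: "(\<lambda>n. measure M ((V g A - V (gs n) A) \<union> (V (gs n) A - V g A))) \<longlonglongrightarrow> 0"
    if A: "A \<in> sets M" for A
  proof -
    define B where "B = V g A"
    have B: "B \<in> sets M" unfolding B_def using A by (rule V_sets)
    have lim: "(\<lambda>n. emeasure M ((B - V (hn n) B) \<union> (V (hn n) B - B))) \<longlonglongrightarrow> 0"
    proof (rule tendsto_ennreal_0I)
      fix \<epsilon> :: real assume e: "0 < \<epsilon>"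
      have fM: "finite_measure M" by (rule P.finite_measure_axioms)
      have "B \<in> sigma_sets (space M) P.generator" using B P.sets_PiM_generator by simp
      from approx_sigma[OF P.algebra_generator fM fM P.sets_PiM_generator P.sets_PiM_generator this, rule_format, of "\<epsilon> / 3"] e
      obtain C where C: "C \<in> P.generator" "measure M ((B - C) \<union> (C - B)) < \<epsilon> / 3" by auto
      from C(1) obtain J X where JX: "C = prod_emb dyadics m J X" "finite J" "J \<subseteq> dyadics" "X \<in> sets (PiM J m)"
        by (auto simp: P.generator.simps)
      have Cs: "C \<in> sets M" using JX by (auto intro: measurable_prod_emb)
      define S where "S = (B - C) \<union> (C - B)"
      have Ss: "S \<in> sets M" unfolding S_def using B Cs by auto
      have MS: "emeasure M S \<le> ennreal (\<epsilon> / 3)"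
      proof -
        have "emeasure M S = ennreal (measure M S)" by (simp add: P.emeasure_eq_measure)
        also have "\<dots> \<le> ennreal (\<epsilon> / 3)" using C(2) unfolding S_def by (intro ennreal_leI) linarith
        finally show ?thesis .
      qed
      obtain F where F: "finite F" "F \<subseteq> dyadics"
        "\<And>h. (\<forall>d. \<bar>real_of_int (h d)\<bar> \<le> G) \<Longrightarrow> (\<forall>d\<in>F. h d = 0) \<Longrightarrow> TV h (ennreal (\<epsilon> / 3))"
        using tail_TV[of "\<epsilon> / 3" G] e G by auto
      have fin: "finite (J \<union> F)" using JX F by auto
      show "eventually (\<lambda>n. emeasure M ((B - V (hn n) B) \<union> (V (hn n) B - B)) \<le> ennreal \<epsilon>) sequentially"
        using ev[OF fin]
      proof (rule eventually_mono)
        fix n assume van: "\<forall>d\<in>J \<union> F. hn n d = 0"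
        have TVn: "TV (hn n) (ennreal (\<epsilon> / 3))" using bh van by (intro F(3)) auto
        have VC: "V (hn n) C = C"
        proof -
          have "V (hn n) C = V (\<lambda>d. 0) C" unfolding JX(1) using JX(3) van by (intro V_emb_local) auto
          also have "\<dots> = C" by (rule V_zero[OF Cs])
          finally show ?thesis .
        qed
        have incl: "(B - V (hn n) B) \<union> (V (hn n) B - B) \<subseteq> S \<union> V (hn n) S"
          unfolding S_def V_def
          by (rule symdiff_incl) (use VC sets.sets_into_space[OF B] in \<open>auto simp: V_def\<close>)
        have "emeasure M ((B - V (hn n) B) \<union> (V (hn n) B - B)) \<le> emeasure M (S \<union> V (hn n) S)"
          using sets.Un[OF Ss V_sets[OF Ss]] incl by (rule emeasure_mono[rotated])
        also have "\<dots> \<le> emeasure M S + emeasure M (V (hn n) S)"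
          using Ss V_sets[OF Ss] by (rule emeasure_subadditive)
        also have "emeasure M (V (hn n) S) \<le> emeasure M S + ennreal (\<epsilon> / 3)"
          using TVn Ss unfolding TV_def by auto
        also have "emeasure M S + (emeasure M S + ennreal (\<epsilon> / 3)) \<le> ennreal (\<epsilon> / 3) + (ennreal (\<epsilon> / 3) + ennreal (\<epsilon> / 3))"
          using MS by (intro add_mono) auto
        also have "\<dots> = ennreal \<epsilon>"
          using e by (simp add: ennreal_plus[symmetric] del: ennreal_plus)
        finally show "emeasure M ((B - V (hn n) B) \<union> (V (hn n) B - B)) \<le> ennreal \<epsilon>" by simp
      qed
    qed
    have lim': "(\<lambda>n. emeasure M ((B - V (hn n) B) \<union> (V (hn n) B - B))) \<longlonglongrightarrow> ennreal 0"
      using lim by simp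
    have "(\<lambda>n. enn2real (emeasure M ((B - V (hn n) B) \<union> (V (hn n) B - B)))) \<longlonglongrightarrow> 0"
      by (rule tendsto_enn2real[OF lim']) simp
    then show ?thesis unfolding B_def Vrel measure_def by simp
  qed
  show ?thesis
    unfolding weak_conv_def
  proof (intro conjI ballI)
    show "(\<lambda>n. \<integral>\<^sup>+ x. ennreal \<bar>enn2real (RN_deriv M (distr M M (shift (gs n))) x)
                        - enn2real (RN_deriv M (distr M M (shift g)) x)\<bar> \<partial>M) \<longlonglongrightarrow> 0"
      by (rule part1)
  next
    fix A assume A: "A \<in> sets M"
    show "(\<lambda>n. measure M ((shift g -` A \<inter> space M - (shift (gs n) -` A \<inter> space M)) \<union>
                           (shift (gs n) -` A \<inter> space M - (shift g -` A \<inter> space M)))) \<longlonglongrightarrow> 0"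
      using part2[OF A] unfolding V_def .
  qed
qed

end

lemma summ_transfer:
  fixes \<beta> :: "real \<Rightarrow> real" and p :: real
  assumes pos: "\<forall>d\<in>dyadics. \<beta> d > 0" and p: "0 < p" "p < 1/2"
    and s: "(\<lambda>d. \<beta> d powr p) summable_on dyadics"
  shows "(\<lambda>d. min 1 (sqrt (\<beta> d))) summable_on dyadics"
proof (rule summable_on_comparison_test[OF s])
  fix d assume d: "d \<in> dyadics"
  then have b: "0 < \<beta> d" using pos by auto
  show "0 \<le> min 1 (sqrt (\<beta> d))" using b by simp
  show "min 1 (sqrt (\<beta> d)) \<le> \<beta> d powr p"
  proof (cases "\<beta> d \<le> 1")
    case True
    have "sqrt (\<beta> d) = \<beta> d powr (1/2)" using b by (simp add: powr_half_sqrt)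
    also have "\<dots> \<le> \<beta> d powr p" using True b p by (intro powr_mono') auto
    finally show ?thesis by simp
  next
    case False
    have "1 \<le> \<beta> d powr p" using False p by (intro ge_one_powr_ge_zero) auto
    then show ?thesis by simp
  qed
qed

theorem proposition3p13:
  fixes \<beta> :: "real \<Rightarrow> real" and p :: real
  assumes "\<forall>d\<in>dyadics. \<beta> d > 0"
    and "0 < p" and "p < 1/2"
    and "(\<lambda>d. \<beta> d powr p) summable_on dyadics"
  shows "\<forall>g\<in>finsupp_D. \<exists>gs :: nat \<Rightarrow> real \<Rightarrow> int.
           (\<forall>n. gs n \<in> Zfr \<and> nonsingular_aut (mD \<beta>) (shift (gs n))) \<and>
           weak_conv (mD \<beta>) (\<lambda>n. shift (gs n)) (shift g)"
proof
  fix g assume g: "g \<in> finsupp_D"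
  interpret ctx2 \<beta>
  proof
    show "\<forall>d\<in>dyadics. \<beta> d > 0" by (rule assms(1))
    show "(\<lambda>d. min 1 (sqrt (\<beta> d))) summable_on dyadics"
      by (rule summ_transfer[OF assms])
  qed
  define S where "S = {d \<in> dyadics. g d \<noteq> 0}"
  have S: "finite S" "S \<subseteq> dyadics" using g by (auto simp: S_def finsupp_D_def)
  have g0: "g d = 0" if "d \<notin> S" for d
    using g that by (auto simp: S_def finsupp_D_def)
  obtain N where N: "\<forall>s\<in>S. \<exists>a::nat. s = real a / 2 ^ N" using dyadic_common[OF S] by blast
  define G where "G = (\<Sum>s\<in>S. \<bar>real_of_int (g s)\<bar>)"
  define gs where "gs n = approx g S (n + (N + 1))" for n
  define hn where "hn n d = (if d \<in> dyadics then gs n d - g d else 0)" for n d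
  have bg: "\<bar>real_of_int (g d)\<bar> \<le> G" for d
  proof (cases "d \<in> S")
    case True
    then show ?thesis unfolding G_def using S(1)
      by (intro member_le_sum) auto
  next
    case False
    then show ?thesis using g0[OF False] unfolding G_def by (simp add: sum_nonneg)
  qed
  have bgs: "\<bar>real_of_int (gs n d)\<bar> \<le> G" for n d
    unfolding gs_def G_def by (rule approx_bound)
  have bh: "\<bar>real_of_int (hn n d)\<bar> \<le> 2 * G" for n d
  proof -
    have "\<bar>real_of_int (gs n d) - real_of_int (g d)\<bar> \<le> 2 * G" using bgs[of n d] bg[of d] by linarith
    moreover have "0 \<le> G" using bg[of 0] by linarith
    ultimately show ?thesis unfolding hn_def by auto
  qed
  have bg2: "\<bar>real_of_int (g d)\<bar> \<le> 2 * G" for d using bg[of d] bg[of 0] by linarith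
  have bgs2: "\<bar>real_of_int (gs n d)\<bar> \<le> 2 * G" for n d using bgs[of n d] bg[of 0] by linarith
  have rel: "gs n d = g d + hn n d" if "d \<in> dyadics" for n d using that by (simp add: hn_def)
  have ev: "eventually (\<lambda>n. \<forall>d\<in>F. hn n d = 0) sequentially" if F: "finite F" for F
  proof -
    have inner: "eventually (\<lambda>n. \<forall>s\<in>S. s < d \<longrightarrow> 1 / 2 ^ (n + (N + 1)) \<le> d - s) sequentially" for d
    proof -
      have "\<forall>s\<in>S. eventually (\<lambda>n. s < d \<longrightarrow> 1 / 2 ^ (n + (N + 1)) \<le> d - s) sequentially"
      proof
        fix s assume "s \<in> S"
        show "eventually (\<lambda>n. s < d \<longrightarrow> 1 / 2 ^ (n + (N + 1)) \<le> d - s) sequentially"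
        proof (cases "s < d")
          case True
          then have "0 < d - s" by simp
          from eventually_small_pow[OF this, of "N + 1"] show ?thesis
            by (rule eventually_mono) simp
        next
          case False
          then show ?thesis by simp
        qed
      qed
      then show ?thesis by (rule eventually_ball_finite[OF S(1)])
    qed
    have "eventually (\<lambda>n. \<forall>d\<in>F. \<forall>s\<in>S. s < d \<longrightarrow> 1 / 2 ^ (n + (N + 1)) \<le> d - s) sequentially"
      using inner by (intro eventually_ball_finite[OF F]) auto
    then show ?thesis
    proof (rule eventually_mono)
      fix n assume far: "\<forall>d\<in>F. \<forall>s\<in>S. s < d \<longrightarrow> 1 / 2 ^ (n + (N + 1)) \<le> d - s"
      show "\<forall>d\<in>F. hn n d = 0"
      proof
        fix d assume d: "d \<in> F"
        show "hn n d = 0"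
        proof (cases "d \<in> dyadics")
          case False then show ?thesis by (simp add: hn_def)
        next
          case True
          show ?thesis
          proof (cases "d \<in> S")
            case True
            have "gs n d = g d" unfolding gs_def by (rule approx_on_S[OF S N _ True]) simp
            then show ?thesis by (simp add: hn_def)
          next
            case False
            have "gs n d = 0" unfolding gs_def
              by (rule approx_vanish[OF S N False]) (use far d in auto)
            then show ?thesis using g0[OF False] by (simp add: hn_def)
          qed
        qed
      qed
    qed
  qed
  show "\<exists>gs :: nat \<Rightarrow> real \<Rightarrow> int.
           (\<forall>n. gs n \<in> Zfr \<and> nonsingular_aut (mD \<beta>) (shift (gs n))) \<and>
           weak_conv (mD \<beta>) (\<lambda>n. shift (gs n)) (shift g)"
  proof (intro exI conjI allI)
    fix n
    show "gs n \<in> Zfr" unfolding gs_def by (rule approx_Zfr[OF S N]) auto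
    show "nonsingular_aut (mD \<beta>) (shift (gs n))" unfolding mD_eq using bgs by (rule nonsing)
  next
    show "weak_conv (mD \<beta>) (\<lambda>n. shift (gs n)) (shift g)"
      unfolding mD_eq using bg2 bgs2 rel bh ev by (rule main)
  qed
qed

end
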